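(* Let $q\ge5$ be prime and $r,s\ge2$ integers. Then $\chi_D(LG_q\otimes K_{r,s})=r+s+1$.
   Context: Let $V=\mathbb{F}_q^3$, $\mathcal{P}$ the set of $1$-dimensional subspaces ("points") and $\mathcal{L}$ the set of $2$-dimensional subspaces ("lines") of $V$. The graph $LG_q\otimes K_{r,s}$ has vertex set $(\mathcal{P}\times[r])\sqcup(\mathcal{L}\times[s])$, where $[m]=\{1,\dots,m\}$, and for $p\in\mathcal{P}$, $l\in\mathcal{L}$, $i\in[r]$, $j\in[s]$, the vertex $(p,i)$ is adjacent to $(l,j)$ iff $p\subset l$; there are no other edges. A coloring is distinguishing if the only graph automorphism mapping every color class onto itself is the identity; $\chi_D(G)$ is the minimum number of colors of a proper distinguishing coloring of $G$. *)

theory Defs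
  imports Main "HOL-Computational_Algebra.Primes"
begin

definition graph_aut :: "'v set \<Rightarrow> ('v \<Rightarrow> 'v \<Rightarrow> bool) \<Rightarrow> ('v \<Rightarrow> 'v) \<Rightarrow> bool" where
  "graph_aut V E f \<longleftrightarrow> bij_betw f V V \<and> (\<forall>u\<in>V. \<forall>v\<in>V. E u v \<longleftrightarrow> E (f u) (f v))"

definition proper_coloring :: "'v set \<Rightarrow> ('v \<Rightarrow> 'v \<Rightarrow> bool) \<Rightarrow> ('v \<Rightarrow> nat) \<Rightarrow> bool" where
  "proper_coloring V E c \<longleftrightarrow> (\<forall>u\<in>V. \<forall>v\<in>V. E u v \<longrightarrow> c u \<noteq> c v)"

definition distinguishing :: "'v set \<Rightarrow> ('v \<Rightarrow> 'v \<Rightarrow> bool) \<Rightarrow> ('v \<Rightarrow> nat) \<Rightarrow> bool" where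
  "distinguishing V E c \<longleftrightarrow>
     (\<forall>f. graph_aut V E f \<and> (\<forall>v\<in>V. c (f v) = c v) \<longrightarrow> (\<forall>v\<in>V. f v = v))"

definition chi_D :: "'v set \<Rightarrow> ('v \<Rightarrow> 'v \<Rightarrow> bool) \<Rightarrow> nat" where
  "chi_D V E = (LEAST k. \<exists>c. c ` V \<subseteq> {..<k} \<and> proper_coloring V E c \<and> distinguishing V E c)"

type_synonym vec3 = "nat \<times> nat \<times> nat"

definition Vq :: "nat \<Rightarrow> vec3 set" where
  "Vq q = {0..<q} \<times> {0..<q} \<times> {0..<q}"

fun vadd :: "nat \<Rightarrow> vec3 \<Rightarrow> vec3 \<Rightarrow> vec3" where
  "vadd q (a, b, c) (d, e, f) = ((a + d) mod q, (b + e) mod q, (c + f) mod q)"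

fun smul :: "nat \<Rightarrow> nat \<Rightarrow> vec3 \<Rightarrow> vec3" where
  "smul q k (a, b, c) = ((k * a) mod q, (k * b) mod q, (k * c) mod q)"

definition points :: "nat \<Rightarrow> vec3 set set" where
  "points q = {{smul q k v | k. k < q} | v. v \<in> Vq q \<and> v \<noteq> (0, 0, 0)}"

definition lines :: "nat \<Rightarrow> vec3 set set" where
  "lines q = {{vadd q (smul q a u) (smul q b w) | a b. a < q \<and> b < q} | u w.
      u \<in> Vq q \<and> w \<in> Vq q \<and>
      (\<forall>a<q. \<forall>b<q. vadd q (smul q a u) (smul q b w) = (0, 0, 0) \<longrightarrow> a = 0 \<and> b = 0)}"

type_synonym lgvert = "(vec3 set \<times> nat) + (vec3 set \<times> nat)"

definition LGK_verts :: "nat \<Rightarrow> nat \<Rightarrow> nat \<Rightarrow> lgvert set" where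
  "LGK_verts q r s = Inl ` (points q \<times> {1..r}) \<union> Inr ` (lines q \<times> {1..s})"

fun LGK_adj :: "lgvert \<Rightarrow> lgvert \<Rightarrow> bool" where
  "LGK_adj (Inl (p, i)) (Inr (l, j)) = (p \<subseteq> l)"
| "LGK_adj (Inr (l, j)) (Inl (p, i)) = (p \<subseteq> l)"
| "LGK_adj _ _ = False"

end

theory Submission
  imports Defs
begin

definition pt :: "nat \<Rightarrow> vec3 \<Rightarrow> vec3 set" where
  "pt q v = {smul q k v | k. k < q}"
definition sp2 :: "nat \<Rightarrow> vec3 \<Rightarrow> vec3 \<Rightarrow> vec3 set" where
  "sp2 q u w = {vadd q (smul q a u) (smul q b w) | a b. a < q \<and> b < q}"
definition indep :: "nat \<Rightarrow> vec3 \<Rightarrow> vec3 \<Rightarrow> bool" where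
  "indep q u w = (\<forall>a<q. \<forall>b<q. vadd q (smul q a u) (smul q b w) = (0, 0, 0) \<longrightarrow> a = 0 \<and> b = 0)"

lemma points_alt: "points q = {pt q v | v. v \<in> Vq q \<and> v \<noteq> (0,0,0)}"
  by (simp add: points_def pt_def)
lemma lines_alt: "lines q = {sp2 q u w | u w. u \<in> Vq q \<and> w \<in> Vq q \<and> indep q u w}"
  by (simp add: lines_def sp2_def indep_def)

lemma Vq_iff[simp]: "(a,b,c) \<in> Vq q \<longleftrightarrow> a < q \<and> b < q \<and> c < q"
  by (simp add: Vq_def)

lemma modeq_dvd: "(x::nat) mod q = y mod q \<longleftrightarrow> int q dvd int x - int y"
  by (metis of_nat_eq_iff zmod_int mod_eq_dvd_iff)

lemma lc_formula: "vadd q (smul q a (u1,u2,u3)) (smul q b (w1,w2,w3)) =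
   ((a*u1+b*w1) mod q, (a*u2+b*w2) mod q, (a*u3+b*w3) mod q)"
  by (simp add: mod_add_eq)

locale pg =
  fixes q :: nat
  assumes pq: "prime q" and q5: "5 \<le> q"
begin

lemma q1: "1 < q" using q5 by simp
lemma qpos: "0 < q" using q5 by simp
lemma pqi: "prime (int q)" using pq by simp

lemma smul_Vq[simp]: "smul q k v \<in> Vq q"
  using qpos by (cases v rule: prod_cases3) auto
lemma vadd_Vq[simp]: "vadd q u v \<in> Vq q"
  using qpos by (cases u rule: prod_cases3, cases v rule: prod_cases3) auto

lemma small_eq: "(x::nat) < q \<Longrightarrow> y < q \<Longrightarrow> x = y \<longleftrightarrow> int q dvd int x - int y"
  by (metis modeq_dvd mod_less)

lemma small_zero: "(x::nat) < q \<Longrightarrow> x = 0 \<longleftrightarrow> int q dvd int x"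
  using small_eq[of x 0] qpos by simp

lemma prime_dvd_prod: "int q dvd a * b \<longleftrightarrow> int q dvd a \<or> int q dvd b"
  using pqi prime_dvd_mult_iff by blast

end

context pg begin

abbreviation z0 :: vec3 where "z0 \<equiv> (0,0,0)"

lemma smul_smul: "smul q j (smul q k v) = smul q (j*k) v"
  by (cases v rule: prod_cases3) (simp add: mod_simps mult.assoc)
lemma smul_vadd: "smul q k (vadd q x y) = vadd q (smul q k x) (smul q k y)"
  by (cases x rule: prod_cases3, cases y rule: prod_cases3) (simp add: mod_simps distrib_left)
lemma vadd_comm: "vadd q x y = vadd q y x"
  by (cases x rule: prod_cases3, cases y rule: prod_cases3) (simp only: vadd.simps add.commute)
lemma vadd_assoc: "vadd q (vadd q x y) z = vadd q x (vadd q y z)"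
  by (cases x rule: prod_cases3, cases y rule: prod_cases3, cases z rule: prod_cases3) (simp only: vadd.simps mod_add_left_eq mod_add_right_eq add.assoc)
lemma smul_add: "vadd q (smul q a x) (smul q b x) = smul q (a+b) x"
  by (cases x rule: prod_cases3) (simp add: mod_simps distrib_right)
lemma smul_mod: "smul q (k mod q) x = smul q k x"
  by (cases x rule: prod_cases3) (simp add: mod_simps)
lemma smul_0[simp]: "smul q 0 x = z0"
  by (cases x rule: prod_cases3) simp
lemma smul_q: "smul q q x = z0"
  by (cases x rule: prod_cases3) simp
lemma smul_1: "x \<in> Vq q \<Longrightarrow> smul q 1 x = x"
  by (cases x rule: prod_cases3) simp
lemma vadd_0: "x \<in> Vq q \<Longrightarrow> vadd q z0 x = x"
  by (cases x rule: prod_cases3) simp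
lemma vadd_0r: "x \<in> Vq q \<Longrightarrow> vadd q x z0 = x"
  by (cases x rule: prod_cases3) simp
lemma smul_z0[simp]: "smul q k z0 = z0" by simp
lemma z0_Vq[simp]: "z0 \<in> Vq q" using qpos by simp

lemma smul_zero_iff: "x \<in> Vq q \<Longrightarrow> m < q \<Longrightarrow> m \<noteq> 0 \<Longrightarrow> smul q m x = z0 \<longleftrightarrow> x = z0"
proof -
  assume x: "x \<in> Vq q" and m: "m < q" "m \<noteq> 0"
  have nd: "\<not> q dvd m" using m by (meson dvd_imp_le gr0I not_le)
  have c: "c < q \<Longrightarrow> (m * c) mod q = 0 \<longleftrightarrow> c = 0" for c
  proof -
    assume cq: "c < q"
    have "(m * c) mod q = 0 \<longleftrightarrow> q dvd m * c" by (simp add: dvd_eq_mod_eq_0)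
    also have "\<dots> \<longleftrightarrow> q dvd c" using prime_dvd_mult_iff[OF pq, of m c] nd by blast
    also have "\<dots> \<longleftrightarrow> c = 0" using cq by (metis dvd_0_right dvd_imp_le not_le gr0I)
    finally show ?thesis .
  qed
  obtain a b cc where xe: "x = (a,b,cc)" by (cases x rule: prod_cases3)
  have "a < q" "b < q" "cc < q" using x xe by auto
  then show ?thesis unfolding xe using c[of a] c[of b] c[of cc] by simp
qed

lemma cancel_q: "a < q \<Longrightarrow> a' < q \<Longrightarrow> (a + (q - a')) mod q = 0 \<Longrightarrow> a = a'"
proof -
  assume h1: "a < q" and h2: "a' < q" and h3: "(a + (q - a')) mod q = 0"
  show "a = a'"
  proof (cases "a' \<le> a")
    case True
    have e: "a + (q - a') = (a - a') + q" using h2 True by simp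
    have "(a + (q - a')) mod q = a - a'" unfolding e using h1 by simp
    then show ?thesis using h3 True by simp
  next
    case False
    then have "0 < a + (q - a')" "a + (q - a') < q" using h1 h2 by auto
    then have "(a + (q - a')) mod q \<noteq> 0" using h2 by simp
    then show ?thesis using h3 by blast
  qed
qed

lemma lc_neg: "a' \<le> q \<Longrightarrow> x \<in> Vq q \<Longrightarrow> vadd q (smul q a' x) (smul q (q - a') x) = z0"
  using smul_add[of a' x "q - a'"] smul_q by simp

end

context pg begin

abbreviation L :: "vec3 \<Rightarrow> vec3 \<Rightarrow> nat \<Rightarrow> nat \<Rightarrow> vec3" where
  "L u w a b \<equiv> vadd q (smul q a u) (smul q b w)"

lemma L_add: "vadd q (L u w a b) (L u w c d) = L u w (a+c) (b+d)"
  by (cases u rule: prod_cases3, cases w rule: prod_cases3) (simp add: lc_formula mod_add_eq algebra_simps)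

lemma L_smul: "smul q k (L u w a b) = L u w (k*a) (k*b)"
  by (cases u rule: prod_cases3, cases w rule: prod_cases3) (simp add: lc_formula mod_simps algebra_simps)

lemma L_mod: "L u w (a mod q) (b mod q) = L u w a b"
  by (simp add: smul_mod)

lemma L_q: "L u w q q = z0"
  by (simp add: smul_q)

lemma L_inj:
  assumes "indep q u w" "a < q" "b < q" "a' < q" "b' < q" and e: "L u w a b = L u w a' b'"
  shows "a = a' \<and> b = b'"
proof -
  have s1: "a' + (q - a') = q" "b' + (q - b') = q" using assms by auto
  have "L u w (a + (q - a')) (b + (q - b')) = vadd q (L u w a b) (L u w (q - a') (q - b'))"
    by (simp only: L_add)
  also have "\<dots> = vadd q (L u w a' b') (L u w (q - a') (q - b'))" by (simp only: e)
  also have "\<dots> = L u w q q" by (simp only: L_add s1)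
  also have "\<dots> = z0" by (rule L_q)
  finally have "L u w ((a + (q - a')) mod q) ((b + (q - b')) mod q) = z0" by (simp only: L_mod)
  moreover have "(a + (q - a')) mod q < q" "(b + (q - b')) mod q < q" using qpos by auto
  ultimately have "(a + (q - a')) mod q = 0 \<and> (b + (q - b')) mod q = 0"
    using assms(1) unfolding indep_def by (elim allE impE) (assumption+)
  then show ?thesis using cancel_q[OF assms(2) assms(4)] cancel_q[OF assms(3) assms(5)] by simp
qed

lemma sp2_Vq: "sp2 q u w \<subseteq> Vq q" unfolding sp2_def by auto


lemma sp2_memI: "a < q \<Longrightarrow> b < q \<Longrightarrow> L u w a b \<in> sp2 q u w"
  unfolding sp2_def by blast

lemma sp2_z0: "z0 \<in> sp2 q u w"
  using sp2_memI[of 0 0 u w] qpos by simp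

lemma sp2_u: "u \<in> Vq q \<Longrightarrow> u \<in> sp2 q u w"
proof -
  have "L u w 1 0 = u" if "u \<in> Vq q" using that by (simp only: smul_1 smul_0 vadd_0r)
  then show "u \<in> Vq q \<Longrightarrow> u \<in> sp2 q u w" using sp2_memI[of 1 0 u w] q1 qpos by simp
qed

lemma sp2_w: "w \<in> Vq q \<Longrightarrow> w \<in> sp2 q u w"
proof -
  have "L u w 0 1 = w" if "w \<in> Vq q" using that by (simp only: smul_1 smul_0 vadd_0)
  then show "w \<in> Vq q \<Longrightarrow> w \<in> sp2 q u w" using sp2_memI[of 0 1 u w] q1 qpos by simp
qed

lemma sp2_closed:
  assumes "x \<in> sp2 q u w" "y \<in> sp2 q u w"
  shows "vadd q (smul q \<alpha> x) (smul q \<beta> y) \<in> sp2 q u w"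
proof -
  obtain a b where x: "x = L u w a b" using assms(1) unfolding sp2_def by blast
  obtain c d where y: "y = L u w c d" using assms(2) unfolding sp2_def by blast
  have "vadd q (smul q \<alpha> x) (smul q \<beta> y) = L u w ((\<alpha>*a+\<beta>*c) mod q) ((\<alpha>*b+\<beta>*d) mod q)"
    unfolding x y L_smul L_add L_mod ..
  then show ?thesis using sp2_memI qpos by simp
qed

lemma sp2_smul: "x \<in> sp2 q u w \<Longrightarrow> smul q k x \<in> sp2 q u w"
  using sp2_closed[of x u w x k 0] sp2_Vq by (auto simp: vadd_0r)

lemma sp2_sub: "x \<in> sp2 q u w \<Longrightarrow> y \<in> sp2 q u w \<Longrightarrow> sp2 q x y \<subseteq> sp2 q u w"
proof
  fix z assume "x \<in> sp2 q u w" "y \<in> sp2 q u w" "z \<in> sp2 q x y"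
  then obtain a b where "z = L x y a b" unfolding sp2_def[of q x y] by blast
  then show "z \<in> sp2 q u w" using sp2_closed \<open>x \<in> sp2 q u w\<close> \<open>y \<in> sp2 q u w\<close> by simp
qed

lemma sp2_image: "sp2 q u w = (\<lambda>(a,b). L u w a b) ` ({..<q} \<times> {..<q})"
  unfolding sp2_def by auto

lemma sp2_finite: "finite (sp2 q u w)"
  unfolding sp2_image by simp

lemma sp2_card: "indep q u w \<Longrightarrow> card (sp2 q u w) = q * q"
proof -
  assume i: "indep q u w"
  have "inj_on (\<lambda>(a,b). L u w a b) ({..<q} \<times> {..<q})"
    using L_inj[OF i] by (auto simp: inj_on_def)
  then show ?thesis unfolding sp2_image by (simp add: card_image card_cartesian_product)
qed

end

context pg begin

lemma pt_Vq: "pt q v \<subseteq> Vq q" unfolding pt_def by auto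
lemma pt_memI: "k < q \<Longrightarrow> smul q k v \<in> pt q v" unfolding pt_def by blast
lemma pt_memI': "smul q k v \<in> pt q v"
  using pt_memI[of "k mod q" v] qpos by (simp add: smul_mod)
lemma pt_self: "v \<in> Vq q \<Longrightarrow> v \<in> pt q v"
  using pt_memI'[of 1 v] by (simp only: smul_1)
lemma pt_z0: "z0 \<in> pt q v" using pt_memI'[of 0 v] by simp
lemma pt_closed: "x \<in> pt q v \<Longrightarrow> smul q j x \<in> pt q v"
proof -
  assume "x \<in> pt q v"
  then obtain k where "x = smul q k v" unfolding pt_def by blast
  then show ?thesis by (simp only: smul_smul pt_memI')
qed

lemma pt_image: "pt q v = (\<lambda>k. smul q k v) ` {..<q}" unfolding pt_def by auto
lemma pt_finite: "finite (pt q v)" unfolding pt_image by simp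

lemma smul_inj:
  assumes v: "v \<in> Vq q" "v \<noteq> z0" and k: "k < q" "k' < q" and e: "smul q k v = smul q k' v"
  shows "k = k'"
proof -
  have s1: "k' + (q - k') = q" using k by simp
  have "smul q (k + (q - k')) v = vadd q (smul q k v) (smul q (q - k') v)" by (simp only: smul_add)
  also have "\<dots> = vadd q (smul q k' v) (smul q (q - k') v)" by (simp only: e)
  also have "\<dots> = z0" by (simp only: smul_add s1 smul_q)
  finally have z: "smul q ((k + (q - k')) mod q) v = z0" by (simp only: smul_mod)
  have "(k + (q - k')) mod q = 0"
  proof (rule ccontr)
    assume "(k + (q - k')) mod q \<noteq> 0"
    then have "v = z0" using smul_zero_iff[OF v(1), of "(k + (q - k')) mod q"] z qpos by simp
    then show False using v by simp
  qed
  then show ?thesis using cancel_q[OF k] by simp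
qed

lemma pt_card: "v \<in> Vq q \<Longrightarrow> v \<noteq> z0 \<Longrightarrow> card (pt q v) = q"
proof -
  assume v: "v \<in> Vq q" "v \<noteq> z0"
  have "inj_on (\<lambda>k. smul q k v) {..<q}" using smul_inj[OF v] by (auto simp: inj_on_def)
  then show ?thesis unfolding pt_image by (simp add: card_image)
qed

lemma pt_sub: "x \<in> pt q v \<Longrightarrow> pt q x \<subseteq> pt q v"
proof
  fix y assume "x \<in> pt q v" "y \<in> pt q x"
  then obtain k where "y = smul q k x" unfolding pt_def by blast
  then show "y \<in> pt q v" using pt_closed \<open>x \<in> pt q v\<close> by simp
qed

lemma pt_eq: assumes "w \<in> pt q v" "w \<noteq> z0" "v \<in> Vq q" shows "pt q w = pt q v"
proof -
  have "v \<noteq> z0"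
  proof
    assume "v = z0"
    then obtain k where "w = smul q k z0" using assms(1) unfolding pt_def by blast
    then show False using assms(2) by simp
  qed
  have w: "w \<in> Vq q" using assms(1) pt_Vq by blast
  show ?thesis using pt_sub[OF assms(1)] pt_card[OF w assms(2)] pt_card[OF assms(3) \<open>v \<noteq> z0\<close>]
    pt_finite by (simp add: card_subset_eq)
qed

lemma pt_sub_sp2: "v \<in> Vq q \<Longrightarrow> pt q v \<subseteq> sp2 q u w \<longleftrightarrow> v \<in> sp2 q u w"
proof
  assume "v \<in> Vq q" "pt q v \<subseteq> sp2 q u w"
  then show "v \<in> sp2 q u w" using pt_self by blast
next
  assume h: "v \<in> sp2 q u w"
  show "pt q v \<subseteq> sp2 q u w"
  proof
    fix y assume "y \<in> pt q v"
    then obtain k where "y = smul q k v" unfolding pt_def by blast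
    then show "y \<in> sp2 q u w" using sp2_smul[OF h] by simp
  qed
qed

lemma points_iff: "p \<in> points q \<longleftrightarrow> (\<exists>v. v \<in> Vq q \<and> v \<noteq> z0 \<and> p = pt q v)"
  unfolding points_alt by blast
lemma lines_iff: "l \<in> lines q \<longleftrightarrow> (\<exists>u w. u \<in> Vq q \<and> w \<in> Vq q \<and> indep q u w \<and> l = sp2 q u w)"
  unfolding lines_alt by blast

lemma vadd_neg: "w \<in> Vq q \<Longrightarrow> b \<le> q \<Longrightarrow> vadd q x (smul q b w) = z0 \<Longrightarrow> x \<in> Vq q \<Longrightarrow> x = smul q (q - b) w"
proof -
  assume w: "w \<in> Vq q" and b: "b \<le> q" and e: "vadd q x (smul q b w) = z0" and x: "x \<in> Vq q"
  have s1: "b + (q - b) = q" using b by simp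
  have "smul q (q - b) w = vadd q (vadd q x (smul q b w)) (smul q (q - b) w)"
    by (simp only: e vadd_0 smul_Vq)
  also have "\<dots> = vadd q x (smul q q w)" by (simp only: vadd_assoc smul_add s1)
  also have "\<dots> = x" by (simp only: smul_q vadd_0r x)
  finally show ?thesis by simp
qed

lemma indep_pt:
  assumes v: "v \<in> Vq q" "v \<noteq> z0" and w: "w \<in> Vq q" "w \<noteq> z0" and ne: "pt q v \<noteq> pt q w"
  shows "indep q v w"
  unfolding indep_def
proof (intro allI impI)
  fix a b assume a: "a < q" and b: "b < q" and e: "L v w a b = z0"
  show "a = 0 \<and> b = 0"
  proof (cases "a = 0")
    case True
    then have "smul q b w = z0" using e by (simp add: vadd_0)
    then have "b = 0" using smul_zero_iff[OF w(1) b] w by auto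
    then show ?thesis using True by simp
  next
    case False
    have x0: "smul q a v \<noteq> z0" using smul_zero_iff[OF v(1) a False] v by simp
    have "smul q a v = smul q (q - b) w" using vadd_neg[OF w(1) _ e] b by simp
    then have "smul q a v \<in> pt q w" using pt_memI' by metis
    then have "pt q (smul q a v) = pt q w" using pt_eq x0 w by blast
    moreover have "pt q (smul q a v) = pt q v" using pt_eq[OF pt_memI' x0 v(1)] .
    ultimately show ?thesis using ne by simp
  qed
qed

lemma indepD: "indep q u w \<Longrightarrow> a < q \<Longrightarrow> b < q \<Longrightarrow> L u w a b = z0 \<Longrightarrow> a = 0 \<and> b = 0"
  unfolding indep_def by blast

lemma card_Vq: "card (Vq q) = q * q * q"
  unfolding Vq_def by (simp add: card_cartesian_product)
lemma finite_Vq: "finite (Vq q)" unfolding Vq_def by simp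

lemma line_eq_span:
  assumes l: "l \<in> lines q" and v1: "v1 \<in> Vq q" "v1 \<noteq> z0" and v2: "v2 \<in> Vq q" "v2 \<noteq> z0"
    and ne: "pt q v1 \<noteq> pt q v2" and s: "pt q v1 \<subseteq> l" "pt q v2 \<subseteq> l"
  shows "l = sp2 q v1 v2"
proof -
  obtain u w where uw: "u \<in> Vq q" "w \<in> Vq q" "indep q u w" "l = sp2 q u w" using l lines_iff by blast
  have "v1 \<in> l" "v2 \<in> l" using s pt_self[OF v1(1)] pt_self[OF v2(1)] by blast+
  then have sub: "sp2 q v1 v2 \<subseteq> l" using sp2_sub uw by simp
  have "card (sp2 q v1 v2) = q * q" using sp2_card indep_pt[OF v1 v2 ne] by simp
  moreover have "card l = q * q" using sp2_card uw by simp
  ultimately show ?thesis using sub sp2_finite uw by (metis card_subset_eq)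
qed

lemma uniq:
  assumes "p \<in> points q" "p' \<in> points q" "p \<noteq> p'" "l \<in> lines q" "l' \<in> lines q"
    "p \<subseteq> l" "p' \<subseteq> l" "p \<subseteq> l'" "p' \<subseteq> l'"
  shows "l = l'"
proof -
  obtain v where v: "v \<in> Vq q" "v \<noteq> z0" "p = pt q v" using assms(1) points_iff by blast
  obtain v' where v': "v' \<in> Vq q" "v' \<noteq> z0" "p' = pt q v'" using assms(2) points_iff by blast
  show ?thesis using line_eq_span[OF assms(4) v(1,2) v'(1,2)] line_eq_span[OF assms(5) v(1,2) v'(1,2)]
    assms v v' by simp
qed

lemma line_points:
  assumes "l \<in> lines q"
  shows "\<exists>u w. u \<in> Vq q \<and> w \<in> Vq q \<and> u \<noteq> z0 \<and> w \<noteq> z0 \<and> pt q u \<noteq> pt q w \<and> pt q u \<subseteq> l \<and> pt q w \<subseteq> l"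
proof -
  obtain u w where uw: "u \<in> Vq q" "w \<in> Vq q" "indep q u w" "l = sp2 q u w" using assms lines_iff by blast
  have u0: "u \<noteq> z0"
  proof
    assume "u = z0"
    then have "L u w 1 0 = z0" by simp
    then show False using indepD[OF uw(3) q1 qpos] by simp
  qed
  have w0: "w \<noteq> z0"
  proof
    assume "w = z0"
    then have "L u w 0 1 = z0" by simp
    then show False using indepD[OF uw(3) qpos q1] by simp
  qed
  have ne: "pt q u \<noteq> pt q w"
  proof
    assume "pt q u = pt q w"
    then have "u \<in> pt q w" using pt_self[OF uw(1)] by simp
    then obtain k where k: "k < q" "u = smul q k w" unfolding pt_def by auto
    have s1: "k + (q - k) = q" using k by simp
    have "L u w 1 (q - k) = vadd q u (smul q (q - k) w)" by (simp only: smul_1 uw)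
    also have "\<dots> = z0" by (simp only: k smul_add s1 smul_q)
    finally have "L u w 1 ((q - k) mod q) = z0" by (simp only: smul_mod)
    then show False using indepD[OF uw(3) q1 mod_less_divisor[OF qpos]] by simp
  qed
  show ?thesis using u0 w0 ne uw pt_sub_sp2 sp2_u sp2_w by blast
qed

lemma point_on_line_exists_sep:
  assumes "p \<in> points q" "p' \<in> points q" "p \<noteq> p'"
  shows "\<exists>l \<in> lines q. p \<subseteq> l \<and> \<not> p' \<subseteq> l"
proof -
  obtain v where v: "v \<in> Vq q" "v \<noteq> z0" "p = pt q v" using assms(1) points_iff by blast
  obtain v' where v': "v' \<in> Vq q" "v' \<noteq> z0" "p' = pt q v'" using assms(2) points_iff by blast
  let ?W = "sp2 q v v'"
  have cW: "card ?W = q * q" using sp2_card indep_pt[OF v(1,2) v'(1,2)] assms v v' by simp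
  have "q * q < q * q * q" using q5 by simp
  then have "\<not> Vq q \<subseteq> ?W" using cW sp2_finite card_mono by (metis card_Vq not_le)
  then obtain x where x: "x \<in> Vq q" "x \<notin> ?W" by blast
  have x0: "x \<noteq> z0" using x sp2_z0 by metis
  have "pt q v \<subseteq> ?W" using pt_sub_sp2 sp2_u v by blast
  then have nev: "pt q v \<noteq> pt q x" using x pt_self[OF x(1)] by blast
  let ?l = "sp2 q v x"
  have ind: "indep q v x" using indep_pt[OF v(1,2) x(1) x0 nev] .
  have l: "?l \<in> lines q" using lines_iff ind v x by blast
  have pl: "p \<subseteq> ?l" using v pt_sub_sp2 sp2_u by blast
  have "\<not> p' \<subseteq> ?l"
  proof
    assume "p' \<subseteq> ?l"
    then have "?l = ?W" using line_eq_span[OF l v(1,2) v'(1,2)] assms v v' pl by simp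
    then show False using sp2_w x by blast
  qed
  then show ?thesis using l pl by blast
qed

lemma line_sep:
  assumes "l \<in> lines q" "l' \<in> lines q" "l \<noteq> l'"
  shows "\<exists>p \<in> points q. p \<subseteq> l \<and> \<not> p \<subseteq> l'"
proof -
  obtain u w where uw: "u \<in> Vq q" "w \<in> Vq q" "indep q u w" "l = sp2 q u w" using assms(1) lines_iff by blast
  obtain u' w' where uw': "u' \<in> Vq q" "w' \<in> Vq q" "indep q u' w'" "l' = sp2 q u' w'" using assms(2) lines_iff by blast
  have "\<not> l \<subseteq> l'"
  proof
    assume "l \<subseteq> l'"
    moreover have "card l = card l'" using sp2_card uw uw' by simp
    ultimately show False using assms sp2_finite uw' by (metis card_subset_eq)
  qed
  then obtain x where x: "x \<in> l" "x \<notin> l'" by blast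
  have xV: "x \<in> Vq q" using x uw sp2_Vq by blast
  have x0: "x \<noteq> z0" using x uw'(4) sp2_z0 by metis
  have "pt q x \<subseteq> l" using pt_sub_sp2 xV x uw by simp
  moreover have "\<not> pt q x \<subseteq> l'" using pt_self[OF xV] x by blast
  moreover have "pt q x \<in> points q" using points_iff xV x0 by blast
  ultimately show ?thesis by blast
qed

end

context pg begin

definition "F1 k = sp2 q (1,k,0) (0,0,1)"
definition "F2 k = sp2 q (1,0,k) (0,1,0)"
definition "F3 k = sp2 q (0,1,k) (1,0,0)"
definition "F4 k = sp2 q (1,k,0) (0,1,1)"
definition "F5 k = sp2 q (1,0,k) (0,1,1)"
definition "LX = sp2 q (0,1,0) (0,0,1)"
definition "LA = sp2 q (1,1,0) (1,0,1)"

lemma sp2_mem_iff: "v \<in> sp2 q u w \<longleftrightarrow> (\<exists>a b. a < q \<and> b < q \<and> v = L u w a b)"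
  unfolding sp2_def by blast


lemma memF1: "k < q \<Longrightarrow> (x,y,z) \<in> F1 k \<longleftrightarrow> x < q \<and> y < q \<and> z < q \<and> y = (k*x) mod q"
  unfolding F1_def sp2_mem_iff
proof (intro iffI)
  assume "\<exists>a b. a < q \<and> b < q \<and> (x, y, z) = L (1,k,0) (0,0,1) a b"
  then show "x < q \<and> y < q \<and> z < q \<and> y = (k*x) mod q" by (auto simp: lc_formula mod_simps mult.commute add.commute)
next
  assume "x < q \<and> y < q \<and> z < q \<and> y = (k*x) mod q"
  then show "\<exists>a b. a < q \<and> b < q \<and> (x, y, z) = L (1,k,0) (0,0,1) a b"
    by (intro exI[of _ x] exI[of _ z]) (simp add: lc_formula mod_simps mult.commute add.commute)
qed

lemma memF2: "k < q \<Longrightarrow> (x,y,z) \<in> F2 k \<longleftrightarrow> x < q \<and> y < q \<and> z < q \<and> z = (k*x) mod q"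
  unfolding F2_def sp2_mem_iff
proof (intro iffI)
  assume "\<exists>a b. a < q \<and> b < q \<and> (x, y, z) = L (1,0,k) (0,1,0) a b"
  then show "x < q \<and> y < q \<and> z < q \<and> z = (k*x) mod q" by (auto simp: lc_formula mod_simps mult.commute add.commute)
next
  assume "x < q \<and> y < q \<and> z < q \<and> z = (k*x) mod q"
  then show "\<exists>a b. a < q \<and> b < q \<and> (x, y, z) = L (1,0,k) (0,1,0) a b"
    by (intro exI[of _ x] exI[of _ y]) (simp add: lc_formula mod_simps mult.commute add.commute)
qed

lemma memF3: "k < q \<Longrightarrow> (x,y,z) \<in> F3 k \<longleftrightarrow> x < q \<and> y < q \<and> z < q \<and> z = (k*y) mod q"
  unfolding F3_def sp2_mem_iff
proof (intro iffI)
  assume "\<exists>a b. a < q \<and> b < q \<and> (x, y, z) = L (0,1,k) (1,0,0) a b"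
  then show "x < q \<and> y < q \<and> z < q \<and> z = (k*y) mod q" by (auto simp: lc_formula mod_simps mult.commute add.commute)
next
  assume "x < q \<and> y < q \<and> z < q \<and> z = (k*y) mod q"
  then show "\<exists>a b. a < q \<and> b < q \<and> (x, y, z) = L (0,1,k) (1,0,0) a b"
    by (intro exI[of _ y] exI[of _ x]) (simp add: lc_formula mod_simps mult.commute add.commute)
qed

lemma memF4: "k < q \<Longrightarrow> (x,y,z) \<in> F4 k \<longleftrightarrow> x < q \<and> y < q \<and> z < q \<and> y = (k*x+z) mod q"
  unfolding F4_def sp2_mem_iff
proof (intro iffI)
  assume "\<exists>a b. a < q \<and> b < q \<and> (x, y, z) = L (1,k,0) (0,1,1) a b"
  then show "x < q \<and> y < q \<and> z < q \<and> y = (k*x+z) mod q" by (auto simp: lc_formula mod_simps mult.commute add.commute)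
next
  assume "x < q \<and> y < q \<and> z < q \<and> y = (k*x+z) mod q"
  then show "\<exists>a b. a < q \<and> b < q \<and> (x, y, z) = L (1,k,0) (0,1,1) a b"
    by (intro exI[of _ x] exI[of _ z]) (simp add: lc_formula mod_simps mult.commute add.commute)
qed

lemma memF5: "k < q \<Longrightarrow> (x,y,z) \<in> F5 k \<longleftrightarrow> x < q \<and> y < q \<and> z < q \<and> z = (k*x+y) mod q"
  unfolding F5_def sp2_mem_iff
proof (intro iffI)
  assume "\<exists>a b. a < q \<and> b < q \<and> (x, y, z) = L (1,0,k) (0,1,1) a b"
  then show "x < q \<and> y < q \<and> z < q \<and> z = (k*x+y) mod q" by (auto simp: lc_formula mod_simps mult.commute add.commute)
next
  assume "x < q \<and> y < q \<and> z < q \<and> z = (k*x+y) mod q"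
  then show "\<exists>a b. a < q \<and> b < q \<and> (x, y, z) = L (1,0,k) (0,1,1) a b"
    by (intro exI[of _ x] exI[of _ y]) (simp add: lc_formula mod_simps mult.commute add.commute)
qed

lemma memLX: "(x,y,z) \<in> LX \<longleftrightarrow> x < q \<and> y < q \<and> z < q \<and> x = 0"
  unfolding LX_def sp2_mem_iff
proof (intro iffI)
  assume "\<exists>a b. a < q \<and> b < q \<and> (x, y, z) = L (0,1,0) (0,0,1) a b"
  then show "x < q \<and> y < q \<and> z < q \<and> x = 0" by (auto simp: lc_formula mod_simps mult.commute add.commute)
next
  assume "x < q \<and> y < q \<and> z < q \<and> x = 0"
  then show "\<exists>a b. a < q \<and> b < q \<and> (x, y, z) = L (0,1,0) (0,0,1) a b"
    by (intro exI[of _ y] exI[of _ z]) (simp add: lc_formula mod_simps mult.commute add.commute)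
qed

lemma memLA: "(x,y,z) \<in> LA \<longleftrightarrow> x < q \<and> y < q \<and> z < q \<and> x = (y+z) mod q"
  unfolding LA_def sp2_mem_iff
proof (intro iffI)
  assume "\<exists>a b. a < q \<and> b < q \<and> (x, y, z) = L (1,1,0) (1,0,1) a b"
  then show "x < q \<and> y < q \<and> z < q \<and> x = (y+z) mod q" by (auto simp: lc_formula mod_simps mult.commute add.commute)
next
  assume "x < q \<and> y < q \<and> z < q \<and> x = (y+z) mod q"
  then show "\<exists>a b. a < q \<and> b < q \<and> (x, y, z) = L (1,1,0) (1,0,1) a b"
    by (intro exI[of _ y] exI[of _ z]) (simp add: lc_formula mod_simps mult.commute add.commute)
qed

end

context pg begin

lemma indI: "(\<And>a b. a < q \<Longrightarrow> b < q \<Longrightarrow> L u w a b = z0 \<Longrightarrow> a = 0 \<and> b = 0) \<Longrightarrow> indep q u w"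
  unfolding indep_def by blast

lemma lineI: "u \<in> Vq q \<Longrightarrow> w \<in> Vq q \<Longrightarrow> indep q u w \<Longrightarrow> sp2 q u w \<in> lines q"
  using lines_iff by blast

lemma F1_line: "k < q \<Longrightarrow> F1 k \<in> lines q"
  unfolding F1_def using q1 by (intro lineI indI) (auto simp: lc_formula)
lemma F2_line: "k < q \<Longrightarrow> F2 k \<in> lines q"
  unfolding F2_def using q1 by (intro lineI indI) (auto simp: lc_formula)
lemma F3_line: "k < q \<Longrightarrow> F3 k \<in> lines q"
  unfolding F3_def using q1 by (intro lineI indI) (auto simp: lc_formula)
lemma F4_line: "k < q \<Longrightarrow> F4 k \<in> lines q"
  unfolding F4_def using q1 by (intro lineI indI) (auto simp: lc_formula)
lemma F5_line: "k < q \<Longrightarrow> F5 k \<in> lines q"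
  unfolding F5_def using q1 by (intro lineI indI) (auto simp: lc_formula)
lemma LX_line: "LX \<in> lines q"
  unfolding LX_def using q1 by (intro lineI indI) (auto simp: lc_formula)
lemma LA_line: "LA \<in> lines q"
  unfolding LA_def using q1 by (intro lineI indI) (auto simp: lc_formula)

lemma ptsub: "l \<in> lines q \<Longrightarrow> v \<in> Vq q \<Longrightarrow> pt q v \<subseteq> l \<longleftrightarrow> v \<in> l"
proof -
  assume "l \<in> lines q" "v \<in> Vq q"
  then obtain u w where "l = sp2 q u w" using lines_iff by blast
  then show ?thesis using pt_sub_sp2[OF \<open>v \<in> Vq q\<close>] by simp
qed

lemma ptP: "v \<in> Vq q \<Longrightarrow> v \<noteq> z0 \<Longrightarrow> pt q v \<in> points q"
  unfolding points_iff by (rule exI[of _ v]) simp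

lemma pt_neq1: "x < q \<Longrightarrow> y < q \<Longrightarrow> z < q \<Longrightarrow> x \<noteq> 0 \<Longrightarrow> pt q (x,y,z) \<noteq> pt q (0,y',z')"
proof
  assume h: "x < q" "y < q" "z < q" "x \<noteq> 0" "pt q (x,y,z) = pt q (0,y',z')"
  then have "(x,y,z) \<in> pt q (0,y',z')" using pt_self[of "(x,y,z)"] by simp
  then obtain k where "(x,y,z) = smul q k (0,y',z')" unfolding pt_def by blast
  then show False using h by simp
qed
lemma pt_neq2: "x < q \<Longrightarrow> y < q \<Longrightarrow> z < q \<Longrightarrow> y \<noteq> 0 \<Longrightarrow> pt q (x,y,z) \<noteq> pt q (x',0,z')"
proof
  assume h: "x < q" "y < q" "z < q" "y \<noteq> 0" "pt q (x,y,z) = pt q (x',0,z')"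
  then have "(x,y,z) \<in> pt q (x',0,z')" using pt_self[of "(x,y,z)"] by simp
  then obtain k where "(x,y,z) = smul q k (x',0,z')" unfolding pt_def by blast
  then show False using h by simp
qed
lemma pt_neq3: "x < q \<Longrightarrow> y < q \<Longrightarrow> z < q \<Longrightarrow> z \<noteq> 0 \<Longrightarrow> pt q (x,y,z) \<noteq> pt q (x',y',0)"
proof
  assume h: "x < q" "y < q" "z < q" "z \<noteq> 0" "pt q (x,y,z) = pt q (x',y',0)"
  then have "(x,y,z) \<in> pt q (x',y',0)" using pt_self[of "(x,y,z)"] by simp
  then obtain k where "(x,y,z) = smul q k (x',y',0)" unfolding pt_def by blast
  then show False using h by simp
qed

end

locale aut = pg +
  fixes g :: "vec3 set \<Rightarrow> vec3 set" and h :: "vec3 set \<Rightarrow> vec3 set"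
  assumes gP: "p \<in> points q \<Longrightarrow> g p \<in> points q"
    and hL: "l \<in> lines q \<Longrightarrow> h l \<in> lines q"
    and inc: "p \<in> points q \<Longrightarrow> l \<in> lines q \<Longrightarrow> p \<subseteq> l \<longleftrightarrow> g p \<subseteq> h l"
begin

lemma ruleJ:
  assumes "p1 \<in> points q" "p2 \<in> points q" "p1 \<noteq> p2" "g p1 = p1" "g p2 = p2" "l \<in> lines q"
    "p1 \<subseteq> l" "p2 \<subseteq> l"
  shows "h l = l"
  using uniq[of p1 p2 "h l" l] assms inc hL by metis

lemma ruleM:
  assumes "l1 \<in> lines q" "l2 \<in> lines q" "l1 \<noteq> l2" "h l1 = l1" "h l2 = l2" "p \<in> points q"
    "p \<subseteq> l1" "p \<subseteq> l2"
  shows "g p = p"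
proof (rule ccontr)
  assume "g p \<noteq> p"
  moreover have "g p \<subseteq> l1" "g p \<subseteq> l2" using assms inc by metis+
  ultimately have "l1 = l2" using uniq[of p "g p" l1 l2] assms gP by metis
  then show False using assms by simp
qed

end

context pg begin

lemma neqI: "x \<in> A \<Longrightarrow> x \<notin> B \<Longrightarrow> A \<noteq> B" by blast

lemma inv_ex: assumes "0 < a" "a < q" shows "\<exists>k<q. (k*a) mod q = 1"
proof -
  let ?S = "(\<lambda>x. (x,0::nat,0::nat)) ` {..<q}"
  have v: "(a,0,0) \<in> Vq q" "(a,0,0) \<noteq> z0" using assms by auto
  have c1: "card (pt q (a,0,0)) = q" using pt_card[OF v] .
  have c2: "card ?S = q" by (simp add: card_image inj_on_def)
  have sub: "pt q (a,0,0) \<subseteq> ?S" unfolding pt_def using qpos by auto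
  have "pt q (a,0,0) = ?S" using card_subset_eq[OF _ sub] c1 c2 by simp
  moreover have "(1,0,0) \<in> ?S" using q1 by auto
  ultimately have "(1,0,0) \<in> pt q (a,0,0)" by simp
  then obtain k where "k < q" "(1,0,0) = smul q k (a,0,0)" unfolding pt_def by blast
  then show ?thesis by auto
qed

lemma NF:
  assumes "p \<in> points q"
  shows "(\<exists>b<q. \<exists>c<q. p = pt q (1,b,c)) \<or> (\<exists>c<q. p = pt q (0,1,c)) \<or> p = pt q (0,0,1)"
proof -
  obtain v where v: "v \<in> Vq q" "v \<noteq> z0" "p = pt q v" using assms points_iff by blast
  obtain a b c where abc: "v = (a,b,c)" by (cases v rule: prod_cases3)
  have lt: "a < q" "b < q" "c < q" using v abc by auto
  show ?thesis
  proof (cases "a = 0")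
    case False
    then obtain k where k: "k < q" "(k*a) mod q = 1" using inv_ex lt by blast
    let ?w = "smul q k v"
    have w: "?w = (1, (k*b) mod q, (k*c) mod q)" using abc k by simp
    have w0: "?w \<noteq> z0" using w by simp
    have "pt q ?w = p" using pt_eq[OF pt_memI' w0 v(1)] v(3) by simp
    then show ?thesis using w qpos by (metis mod_less_divisor)
  next
    case a0: True
    show ?thesis
    proof (cases "b = 0")
      case False
      then obtain k where k: "k < q" "(k*b) mod q = 1" using inv_ex lt by blast
      let ?w = "smul q k v"
      have w: "?w = (0, 1, (k*c) mod q)" using abc k a0 by simp
      have w0: "?w \<noteq> z0" using w by simp
      have "pt q ?w = p" using pt_eq[OF pt_memI' w0 v(1)] v(3) by simp
      then show ?thesis using w qpos by (metis mod_less_divisor)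
    next
      case b0: True
      then have "c \<noteq> 0" using a0 v abc by auto
      then obtain k where k: "k < q" "(k*c) mod q = 1" using inv_ex lt by blast
      let ?w = "smul q k v"
      have w: "?w = (0, 0, 1)" using abc k a0 b0 by simp
      have w0: "?w \<noteq> z0" using w by simp
      have "pt q ?w = p" using pt_eq[OF pt_memI' w0 v(1)] v(3) by simp
      then show ?thesis using w by simp
    qed
  qed
qed

declare One_nat_def [simp del]

lemmas geo = ptsub F1_line F2_line F3_line F4_line F5_line LX_line LA_line
  memF1 memF2 memF3 memF4 memF5 memLX memLA ptP pt_neq1 pt_neq2 pt_neq3

end

locale aut_base = aut +
  assumes b1: "g (pt q (1,0,0)) = pt q (1,0,0)"
    and b2: "g (pt q (0,1,0)) = pt q (0,1,0)"
    and b3: "g (pt q (0,0,1)) = pt q (0,0,1)"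
    and bA: "h LA = LA"
begin

lemma qq: "1 < q" "2 < q" "0 < q" "Suc 0 < q" "Suc (Suc 0) < q" using q5 by auto


lemma hZ: "h (F2 0) = F2 0"
  by (rule ruleJ[of "pt q (1,0,0)" "pt q (0,1,0)"]) (simp_all add: geo qq b1 b2)
lemma hY: "h (F1 0) = F1 0"
  by (rule ruleJ[of "pt q (1,0,0)" "pt q (0,0,1)"]) (simp_all add: geo qq b1 b3)
lemma hX: "h LX = LX"
  by (rule ruleJ[of "pt q (0,1,0)" "pt q (0,0,1)"]) (simp_all add: geo qq b2 b3)
lemma gR: "g (pt q (1,1,0)) = pt q (1,1,0)"
  by (rule ruleM[of "F2 0" LA]) (simp_all add: geo qq hZ bA neqI[of "(1,0,0)"])
lemma gS: "g (pt q (1,0,1)) = pt q (1,0,1)"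
  by (rule ruleM[of "F1 0" LA]) (simp_all add: geo qq hY bA neqI[of "(1,0,0)"])
lemma hF11: "h (F1 1) = F1 1"
  by (rule ruleJ[of "pt q (0,0,1)" "pt q (1,1,0)"]) (simp_all add: geo qq b3 gR)
lemma hF21: "h (F2 1) = F2 1"
  by (rule ruleJ[of "pt q (1,0,1)" "pt q (0,1,0)"]) (simp_all add: geo qq b2 gS)
lemma gU: "g (pt q (1,1,1)) = pt q (1,1,1)"
  by (rule ruleM[of "F1 1" "F2 1"]) (simp_all add: geo qq hF11 hF21 neqI[of "(0,0,1)"])
lemma hF31: "h (F3 1) = F3 1"
  by (rule ruleJ[of "pt q (1,1,1)" "pt q (1,0,0)"]) (simp_all add: geo qq b1 gU)
lemma gT: "g (pt q (0,1,1)) = pt q (0,1,1)"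
  by (rule ruleM[of "F3 1" LX]) (simp_all add: geo qq hF31 hX neqI[of "(1,0,0)"])

lemma gP: "k < q \<Longrightarrow> g (pt q (1,k,0)) = pt q (1,k,0)"
proof (induction k)
  case 0
  then show ?case using b1 by simp
next
  case (Suc k)
  then have k: "k < q" "Suc k < q" by auto
  have IH: "g (pt q (1,k,0)) = pt q (1,k,0)" using Suc k by simp
  have h4: "h (F4 k) = F4 k"
    by (rule ruleJ[of "pt q (0,1,1)" "pt q (1,k,0)"]) (use k in \<open>simp_all add: geo qq gT IH\<close>)
  have gV: "g (pt q (1,Suc k,1)) = pt q (1,Suc k,1)"
    by (rule ruleM[of "F2 1" "F4 k"]) (use k in \<open>simp_all add: geo qq h4 hF21 neqI[of "(0,1,0)"]\<close>)
  have h1: "h (F1 (Suc k)) = F1 (Suc k)"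
    by (rule ruleJ[of "pt q (1,Suc k,1)" "pt q (0,0,1)"]) (use k in \<open>simp_all add: geo qq gV b3\<close>)
  show ?case
    by (rule ruleM[of "F1 (Suc k)" "F2 0"]) (use k in \<open>simp_all add: geo qq h1 hZ neqI[of "(0,0,1)"]\<close>)
qed

lemma gQ: "c < q \<Longrightarrow> g (pt q (1,0,c)) = pt q (1,0,c)"
proof (induction c)
  case 0
  then show ?case using b1 by simp
next
  case (Suc c)
  then have c: "c < q" "Suc c < q" by auto
  have IH: "g (pt q (1,0,c)) = pt q (1,0,c)" using Suc c by simp
  have h5: "h (F5 c) = F5 c"
    by (rule ruleJ[of "pt q (0,1,1)" "pt q (1,0,c)"]) (use c in \<open>simp_all add: geo qq gT IH\<close>)
  have gV: "g (pt q (1,1,Suc c)) = pt q (1,1,Suc c)"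
    by (rule ruleM[of "F1 1" "F5 c"]) (use c in \<open>simp_all add: geo qq h5 hF11 neqI[of "(0,0,1)"]\<close>)
  have h2: "h (F2 (Suc c)) = F2 (Suc c)"
    by (rule ruleJ[of "pt q (1,1,Suc c)" "pt q (0,1,0)"]) (use c in \<open>simp_all add: geo qq gV b2\<close>)
  show ?case
    by (rule ruleM[of "F2 (Suc c)" "F1 0"]) (use c in \<open>simp_all add: geo qq h2 hY neqI[of "(0,1,0)"]\<close>)
qed

lemma gBC: "b < q \<Longrightarrow> c < q \<Longrightarrow> g (pt q (1,b,c)) = pt q (1,b,c)"
proof -
  assume bc: "b < q" "c < q"
  have h1: "h (F1 b) = F1 b"
    by (rule ruleJ[of "pt q (1,b,0)" "pt q (0,0,1)"]) (use bc in \<open>simp_all add: geo qq gP b3\<close>)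
  have h2: "h (F2 c) = F2 c"
    by (rule ruleJ[of "pt q (1,0,c)" "pt q (0,1,0)"]) (use bc in \<open>simp_all add: geo qq gQ b2\<close>)
  show ?thesis
    by (rule ruleM[of "F1 b" "F2 c"]) (use bc in \<open>simp_all add: geo qq h1 h2 neqI[of "(0,0,1)"]\<close>)
qed

lemma gC: "c < q \<Longrightarrow> g (pt q (0,1,c)) = pt q (0,1,c)"
proof -
  assume c: "c < q"
  have h3: "h (F3 c) = F3 c"
    by (rule ruleJ[of "pt q (1,1,c)" "pt q (1,0,0)"]) (use c in \<open>simp_all add: geo qq gBC b1\<close>)
  show ?thesis
    by (rule ruleM[of "F3 c" "LX"]) (use c in \<open>simp_all add: geo qq h3 hX neqI[of "(1,0,0)"]\<close>)
qed

theorem g_id: "p \<in> points q \<Longrightarrow> g p = p"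
  using NF gBC gC b3 by blast

end

declare One_nat_def [simp del]

definition colr :: "nat \<Rightarrow> nat \<Rightarrow> nat \<Rightarrow> lgvert \<Rightarrow> nat" where
  "colr q r s v = (case v of
     Inl (p,i) \<Rightarrow> (if p = pt q (1,0,0) \<and> i = 1 then r+s else if p = pt q (0,1,0) \<and> i = 2 then r+s else i - 1)
   | Inr (l,j) \<Rightarrow> (if l = sp2 q (1,1,0) (1,0,1) \<and> j = 1 then r+s
       else if (l = sp2 q (1,1,0) (0,0,1) \<or> l = sp2 q (1,2,0) (0,0,1)) \<and> j = 2 then r+s else r + j - 1))"

lemma adj_Inl: "LGK_adj (Inl (p,i)) w = (case w of Inr (l,j) \<Rightarrow> p \<subseteq> l | Inl _ \<Rightarrow> False)"
  by (cases w) auto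
lemma adj_Inr: "LGK_adj (Inr (l,j)) w = (case w of Inl (p,i) \<Rightarrow> p \<subseteq> l | Inr _ \<Rightarrow> False)"
  by (cases w) auto

locale UB = pg +
  fixes r s :: nat
  assumes r2: "2 \<le> r" and s2: "2 \<le> s"
begin

abbreviation "V \<equiv> LGK_verts q r s"
abbreviation "c \<equiv> colr q r s"
abbreviation "E1 \<equiv> pt q (1,0,0)"
abbreviation "E2 \<equiv> pt q (0,1,0)"
abbreviation "E3 \<equiv> pt q (0,0,1)"

lemma inV_l: "Inl (p,i) \<in> V \<longleftrightarrow> p \<in> points q \<and> i \<in> {1..r}"
  unfolding LGK_verts_def by auto
lemma inV_r: "Inr (l,j) \<in> V \<longleftrightarrow> l \<in> lines q \<and> j \<in> {1..s}"
  unfolding LGK_verts_def by auto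

lemma V_cases: "v \<in> V \<Longrightarrow> (\<exists>p i. v = Inl (p,i) \<and> p \<in> points q \<and> i \<in> {1..r}) \<or> (\<exists>l j. v = Inr (l,j) \<and> l \<in> lines q \<and> j \<in> {1..s})"
  unfolding LGK_verts_def by auto

lemma c_l: "c (Inl (p,i)) = (if p = E1 \<and> i = 1 then r+s else if p = E2 \<and> i = 2 then r+s else i - 1)"
  unfolding colr_def by simp
lemma c_r: "c (Inr (l,j)) = (if l = LA \<and> j = 1 then r+s else if (l = F1 1 \<or> l = F1 2) \<and> j = 2 then r+s else r + j - 1)"
  unfolding colr_def LA_def F1_def by simp

lemma qq: "1 < q" "2 < q" "0 < q" "Suc 0 < q" "Suc (Suc 0) < q" using q5 by auto

lemma E12: "E1 \<noteq> E2" by (simp add: geo qq)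
lemma E123: "E1 \<in> points q" "E2 \<in> points q" "E3 \<in> points q" by (simp_all add: geo qq)
lemma Lne: "LA \<noteq> F1 1" "LA \<noteq> F1 2" "F1 1 \<noteq> F1 2"
  by (simp_all add: geo qq neqI[of "(1,1,0)"] neqI[of "(1,0,1)"] neqI[of "(0,0,1)" "F1 1" LA] neqI[of "(0,0,1)" "F1 2" LA])
lemma Lin: "LA \<in> lines q" "F1 1 \<in> lines q" "F1 2 \<in> lines q" by (simp_all add: geo qq)
lemma Enot: "\<not> E1 \<subseteq> LA" "\<not> E1 \<subseteq> F1 1" "\<not> E1 \<subseteq> F1 2" "\<not> E2 \<subseteq> LA" "\<not> E2 \<subseteq> F1 1" "\<not> E2 \<subseteq> F1 2"
  by (simp_all add: geo qq)
lemma E3on: "E3 \<subseteq> F1 1" "E3 \<subseteq> F1 2" by (simp_all add: geo qq)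


lemma rs: "r + s \<ge> 4" "0 < r" "0 < s" using r2 s2 by auto

lemma col_l: "Inl (p,i) \<in> V \<Longrightarrow> c (Inl (p,i)) < r \<or> c (Inl (p,i)) = r + s"
proof -
  assume "Inl (p,i) \<in> V"
  then have "1 \<le> i" "i \<le> r" unfolding inV_l by simp_all
  then have "i - 1 < r" by linarith
  then show ?thesis by (simp add: c_l)
qed
lemma col_r: "Inr (l,j) \<in> V \<Longrightarrow> (r \<le> c (Inr (l,j)) \<and> c (Inr (l,j)) < r + s) \<or> c (Inr (l,j)) = r + s"
proof -
  assume "Inr (l,j) \<in> V"
  then have "1 \<le> j" "j \<le> s" unfolding inV_r by simp_all
  then have "r \<le> r + j - 1 \<and> r + j - 1 < r + s" by linarith
  then show ?thesis by (simp add: c_r)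
qed
lemma col_l_x: "Inl (p,i) \<in> V \<Longrightarrow> c (Inl (p,i)) = r + s \<Longrightarrow> (p = E1 \<and> i = 1) \<or> (p = E2 \<and> i = 2)"
proof (rule ccontr)
  assume a: "Inl (p,i) \<in> V" "c (Inl (p,i)) = r + s" "\<not> ((p = E1 \<and> i = 1) \<or> (p = E2 \<and> i = 2))"
  have h1: "\<not> (p = E1 \<and> i = 1)" "\<not> (p = E2 \<and> i = 2)" using a(3) by blast+
  have "c (Inl (p,i)) = i - 1" by (simp only: c_l h1 if_False)
  moreover have "i \<le> r" using a(1) unfolding inV_l by simp
  ultimately show False using a(2) rs by linarith
qed
lemma col_r_x: "Inr (l,j) \<in> V \<Longrightarrow> c (Inr (l,j)) = r + s \<Longrightarrow> (l = LA \<and> j = 1) \<or> ((l = F1 1 \<or> l = F1 2) \<and> j = 2)"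
proof (rule ccontr)
  assume a: "Inr (l,j) \<in> V" "c (Inr (l,j)) = r + s" "\<not> ((l = LA \<and> j = 1) \<or> ((l = F1 1 \<or> l = F1 2) \<and> j = 2))"
  have h1: "\<not> (l = LA \<and> j = 1)" "\<not> ((l = F1 1 \<or> l = F1 2) \<and> j = 2)" using a(3) by blast+
  have "c (Inr (l,j)) = r + j - 1" by (simp only: c_r h1 if_False)
  moreover have "j \<le> s" "1 \<le> j" using a(1) unfolding inV_r by simp_all
  ultimately show False using a(2) rs by linarith
qed

lemma c_range: "v \<in> V \<Longrightarrow> c v < r + s + 1"
proof -
  assume v: "v \<in> V"
  then consider (L) p i where "v = Inl (p,i)" | (R) l j where "v = Inr (l,j)" using V_cases[OF v] by blast
  then show ?thesis
  proof cases
    case L then have "Inl (p,i) \<in> V" using v by simp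
    then have "c (Inl (p,i)) < r \<or> c (Inl (p,i)) = r + s" by (rule col_l)
    then show ?thesis using L rs by auto
  next
    case R then have "Inr (l,j) \<in> V" using v by simp
    then have "(r \<le> c (Inr (l,j)) \<and> c (Inr (l,j)) < r + s) \<or> c (Inr (l,j)) = r + s" by (rule col_r)
    then show ?thesis using R rs by auto
  qed
qed

lemma proper: "proper_coloring V LGK_adj c"
  unfolding proper_coloring_def
proof (intro ballI impI)
  fix u v assume u: "u \<in> V" and v: "v \<in> V" and a: "LGK_adj u v"
  have key: "c (Inl (p,i)) \<noteq> c (Inr (l,j))" if "Inl (p,i) \<in> V" "Inr (l,j) \<in> V" "p \<subseteq> l" for p i l j
  proof
    assume e: "c (Inl (p,i)) = c (Inr (l,j))"
    have "c (Inl (p,i)) = r + s"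
      using col_l[OF that(1)] col_r[OF that(2)] e by linarith
    then have pE: "p = E1 \<or> p = E2" using col_l_x[OF that(1)] by blast
    have "c (Inr (l,j)) = r + s" using \<open>c (Inl (p,i)) = r + s\<close> e by simp
    then have lE: "l = LA \<or> l = F1 1 \<or> l = F1 2" using col_r_x[OF that(2)] by blast
    show False using pE lE Enot that(3) by blast
  qed
  from u consider (L) p i where "u = Inl (p,i)" | (R) l j where "u = Inr (l,j)" using V_cases[OF u] by blast
  then show "c u \<noteq> c v"
  proof cases
    case L
    have "\<not> (\<exists>p' i'. v = Inl (p',i'))" using a L by auto
    then obtain l j where vv: "v = Inr (l,j)" using V_cases[OF v] by blast
    then show ?thesis using key[of p i l j] L a u v by simp
  next
    case R
    have "\<not> (\<exists>l' j'. v = Inr (l',j'))" using a R by auto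
    then obtain p i where vv: "v = Inl (p,i)" using V_cases[OF v] by blast
    then show ?thesis using key[of p i l j] R a u v by simp
  qed
qed

end

locale UBf = UB +
  fixes f :: "lgvert \<Rightarrow> lgvert"
  assumes aut: "graph_aut V LGK_adj f" and cp: "\<forall>v\<in>V. c (f v) = c v"
begin

lemma fV: "v \<in> V \<Longrightarrow> f v \<in> V"
  using aut unfolding graph_aut_def by (meson bij_betw_apply)
lemma fsurj: "w \<in> V \<Longrightarrow> \<exists>v\<in>V. f v = w"
  using aut unfolding graph_aut_def bij_betw_def by (metis imageE)
lemma fadj: "u \<in> V \<Longrightarrow> v \<in> V \<Longrightarrow> LGK_adj (f u) (f v) = LGK_adj u v"
  using aut unfolding graph_aut_def by metis
lemma fc: "v \<in> V \<Longrightarrow> c (f v) = c v" using cp by blast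

definition tw :: "lgvert \<Rightarrow> lgvert \<Rightarrow> bool" where
  "tw u u' = (\<forall>w\<in>V. LGK_adj u w = LGK_adj u' w)"

lemma tw_f: assumes "u \<in> V" "u' \<in> V" "tw u u'" shows "tw (f u) (f u')"
  unfolding tw_def
proof
  fix w assume "w \<in> V"
  then obtain w0 where w0: "w0 \<in> V" "f w0 = w" using fsurj by blast
  have "LGK_adj (f u) w = LGK_adj u w0" using fadj[OF assms(1) w0(1)] w0(2) by simp
  also have "\<dots> = LGK_adj u' w0" using assms(3) w0(1) unfolding tw_def by blast
  also have "\<dots> = LGK_adj (f u') w" using fadj[OF assms(2) w0(1)] w0(2) by simp
  finally show "LGK_adj (f u) w = LGK_adj (f u') w" .
qed

lemma tw_sym: "tw u u' \<Longrightarrow> tw u' u" unfolding tw_def by simp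
lemma tw_copyL: "tw (Inl (p,i)) (Inl (p,i'))" unfolding tw_def by (simp add: adj_Inl)
lemma tw_copyR: "tw (Inr (l,j)) (Inr (l,j'))" unfolding tw_def by (simp add: adj_Inr)

lemma line_thru: "p \<in> points q \<Longrightarrow> \<exists>l\<in>lines q. p \<subseteq> l"
proof -
  assume p: "p \<in> points q"
  show ?thesis
  proof (cases "p = E1")
    case True
    then have "p \<noteq> E2" using E12 by simp
    then show ?thesis using point_on_line_exists_sep[OF p E123(2)] by blast
  next
    case False
    then show ?thesis using point_on_line_exists_sep[OF p E123(1)] by blast
  qed
qed

lemma tw_ll: assumes "Inl (p,i) \<in> V" "Inl (p',i') \<in> V" "tw (Inl (p,i)) (Inl (p',i'))" shows "p = p'"
proof (rule ccontr)
  assume ne: "p \<noteq> p'"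
  have pp: "p \<in> points q" "p' \<in> points q" using assms(1,2) unfolding inV_l by simp_all
  obtain l where l: "l \<in> lines q" "p \<subseteq> l" "\<not> p' \<subseteq> l" using point_on_line_exists_sep[OF pp ne] by blast
  have w: "Inr (l,1) \<in> V" using l(1) rs unfolding inV_r by simp
  have "LGK_adj (Inl (p,i)) (Inr (l,1)) = LGK_adj (Inl (p',i')) (Inr (l,1))"
    using assms(3) w unfolding tw_def by blast
  then show False using l by simp
qed

lemma tw_rr: assumes "Inr (l,j) \<in> V" "Inr (l',j') \<in> V" "tw (Inr (l,j)) (Inr (l',j'))" shows "l = l'"
proof (rule ccontr)
  assume ne: "l \<noteq> l'"
  have ll: "l \<in> lines q" "l' \<in> lines q" using assms(1,2) unfolding inV_r by simp_all
  obtain p where p: "p \<in> points q" "p \<subseteq> l" "\<not> p \<subseteq> l'" using line_sep[OF ll ne] by blast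
  have w: "Inl (p,1) \<in> V" using p(1) rs unfolding inV_l by simp
  have "LGK_adj (Inr (l,j)) (Inl (p,1)) = LGK_adj (Inr (l',j')) (Inl (p,1))"
    using assms(3) w unfolding tw_def by blast
  then show False using p by simp
qed

lemma tw_lr: assumes "Inl (p,i) \<in> V" "Inr (l,j) \<in> V" shows "\<not> tw (Inl (p,i)) (Inr (l,j))"
proof
  assume t: "tw (Inl (p,i)) (Inr (l,j))"
  have pp: "p \<in> points q" using assms(1) unfolding inV_l by simp
  obtain l0 where l0: "l0 \<in> lines q" "p \<subseteq> l0" using line_thru[OF pp] by blast
  have w: "Inr (l0,1) \<in> V" using l0(1) rs unfolding inV_r by simp
  have "LGK_adj (Inl (p,i)) (Inr (l0,1)) = LGK_adj (Inr (l,j)) (Inr (l0,1))"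
    using t w unfolding tw_def by blast
  then show False using l0 by simp
qed

lemma notInr_of_small: "v \<in> V \<Longrightarrow> c v < r \<Longrightarrow> \<exists>p i. v = Inl (p,i)"
proof -
  assume v: "v \<in> V" and cv: "c v < r"
  show ?thesis
  proof (rule ccontr)
    assume "\<not> (\<exists>p i. v = Inl (p,i))"
    then obtain l j where vv: "v = Inr (l,j)" using V_cases[OF v] by blast
    then show False using col_r[of l j] v cv by auto
  qed
qed

lemma notInl_of_mid: "v \<in> V \<Longrightarrow> r \<le> c v \<Longrightarrow> c v < r + s \<Longrightarrow> \<exists>l j. v = Inr (l,j)"
proof -
  assume v: "v \<in> V" and cv: "r \<le> c v" "c v < r + s"
  show ?thesis
  proof (rule ccontr)
    assume "\<not> (\<exists>l j. v = Inr (l,j))"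
    then obtain p i where vv: "v = Inl (p,i)" using V_cases[OF v] by blast
    then show False using col_l[of p i] v cv by auto
  qed
qed

lemma sideL: assumes "Inl (p,i) \<in> V" shows "\<exists>p' i'. f (Inl (p,i)) = Inl (p',i')"
proof -
  define i0 where "i0 = (if p = E1 then 2 else (1::nat))"
  have v0: "Inl (p,i0) \<in> V" using assms r2 unfolding inV_l i0_def by simp
  have "c (Inl (p,i0)) < r"
  proof (cases "p = E1")
    case True
    then show ?thesis using E12 r2 unfolding i0_def c_l by simp
  next
    case False
    then show ?thesis using r2 unfolding i0_def c_l by simp
  qed
  then have "c (f (Inl (p,i0))) < r" using fc[OF v0] by simp
  then obtain p1 i1 where e1: "f (Inl (p,i0)) = Inl (p1,i1)" using notInr_of_small fV[OF v0] by blast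
  have t: "tw (f (Inl (p,i))) (f (Inl (p,i0)))" using tw_f[OF assms v0 tw_copyL] .
  show ?thesis
  proof (rule ccontr)
    assume "\<not> ?thesis"
    then obtain l j where e: "f (Inl (p,i)) = Inr (l,j)" using V_cases[OF fV[OF assms]] by blast
    have "Inr (l,j) \<in> V" using fV[OF assms] e by simp
    moreover have "Inl (p1,i1) \<in> V" using fV[OF v0] e1 by simp
    ultimately show False using tw_lr[of p1 i1 l j] tw_sym t e e1 by simp
  qed
qed

lemma sideR: assumes "Inr (l,j) \<in> V" shows "\<exists>l' j'. f (Inr (l,j)) = Inr (l',j')"
proof -
  define j0 where "j0 = (if l = LA then 2 else (1::nat))"
  have v0: "Inr (l,j0) \<in> V" using assms s2 unfolding inV_r j0_def by simp
  have "r \<le> c (Inr (l,j0)) \<and> c (Inr (l,j0)) < r + s"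
  proof (cases "l = LA")
    case True
    then show ?thesis using Lne s2 unfolding j0_def c_r by simp
  next
    case False
    then show ?thesis using s2 unfolding j0_def c_r by simp
  qed
  then have "r \<le> c (f (Inr (l,j0))) \<and> c (f (Inr (l,j0))) < r + s" using fc[OF v0] by simp
  then obtain l1 j1 where e1: "f (Inr (l,j0)) = Inr (l1,j1)" using notInl_of_mid fV[OF v0] by blast
  have t: "tw (f (Inr (l,j))) (f (Inr (l,j0)))" using tw_f[OF assms v0 tw_copyR] .
  show ?thesis
  proof (rule ccontr)
    assume "\<not> ?thesis"
    then obtain p i where e: "f (Inr (l,j)) = Inl (p,i)" using V_cases[OF fV[OF assms]] by blast
    have "Inl (p,i) \<in> V" using fV[OF assms] e by simp
    moreover have "Inr (l1,j1) \<in> V" using fV[OF v0] e1 by simp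
    ultimately show False using tw_lr[of p i l1 j1] t e e1 by simp
  qed
qed

end

context UBf begin

definition g :: "vec3 set \<Rightarrow> vec3 set" where
  "g p = (case f (Inl (p,1)) of Inl (p',_) \<Rightarrow> p' | Inr _ \<Rightarrow> {})"
definition h :: "vec3 set \<Rightarrow> vec3 set" where
  "h l = (case f (Inr (l,1)) of Inr (l',_) \<Rightarrow> l' | Inl _ \<Rightarrow> {})"

lemma fL: assumes "Inl (p,i) \<in> V" shows "\<exists>i'. f (Inl (p,i)) = Inl (g p, i') \<and> Inl (g p, i') \<in> V"
proof -
  have v1: "Inl (p,1) \<in> V" using assms unfolding inV_l by simp
  obtain p1 i1 where e1: "f (Inl (p,i)) = Inl (p1,i1)" using sideL[OF assms] by blast
  obtain p2 i2 where e2: "f (Inl (p,1)) = Inl (p2,i2)" using sideL[OF v1] by blast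
  have gp: "g p = p2" unfolding g_def e2 by simp
  have t: "tw (Inl (p1,i1)) (Inl (p2,i2))" using tw_f[OF assms v1 tw_copyL] e1 e2 by simp
  have "Inl (p1,i1) \<in> V" "Inl (p2,i2) \<in> V" using fV[OF assms] fV[OF v1] e1 e2 by simp_all
  then have "p1 = p2" using tw_ll t by blast
  then show ?thesis using e1 gp fV[OF assms] by auto
qed

lemma fR: assumes "Inr (l,j) \<in> V" shows "\<exists>j'. f (Inr (l,j)) = Inr (h l, j') \<and> Inr (h l, j') \<in> V"
proof -
  have v1: "Inr (l,1) \<in> V" using assms unfolding inV_r by simp
  obtain l1 j1 where e1: "f (Inr (l,j)) = Inr (l1,j1)" using sideR[OF assms] by blast
  obtain l2 j2 where e2: "f (Inr (l,1)) = Inr (l2,j2)" using sideR[OF v1] by blast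
  have hl: "h l = l2" unfolding h_def e2 by simp
  have t: "tw (Inr (l1,j1)) (Inr (l2,j2))" using tw_f[OF assms v1 tw_copyR] e1 e2 by simp
  have "Inr (l1,j1) \<in> V" "Inr (l2,j2) \<in> V" using fV[OF assms] fV[OF v1] e1 e2 by simp_all
  then have "l1 = l2" using tw_rr t by blast
  then show ?thesis using e1 hl fV[OF assms] by auto
qed

lemma gP': "p \<in> points q \<Longrightarrow> g p \<in> points q"
proof -
  assume "p \<in> points q"
  then have "Inl (p,1) \<in> V" using rs unfolding inV_l by simp
  then show ?thesis using fL unfolding inV_l by blast
qed

lemma hL': "l \<in> lines q \<Longrightarrow> h l \<in> lines q"
proof -
  assume "l \<in> lines q"
  then have "Inr (l,1) \<in> V" using rs unfolding inV_r by simp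
  then show ?thesis using fR unfolding inV_r by blast
qed

lemma inc': assumes "p \<in> points q" "l \<in> lines q" shows "p \<subseteq> l \<longleftrightarrow> g p \<subseteq> h l"
proof -
  have u: "Inl (p,1) \<in> V" using assms rs unfolding inV_l by simp
  have v: "Inr (l,1) \<in> V" using assms rs unfolding inV_r by simp
  obtain i' where i': "f (Inl (p,1)) = Inl (g p, i')" using fL[OF u] by blast
  obtain j' where j': "f (Inr (l,1)) = Inr (h l, j')" using fR[OF v] by blast
  have "p \<subseteq> l \<longleftrightarrow> LGK_adj (Inl (p,1)) (Inr (l,1))" by simp
  also have "\<dots> \<longleftrightarrow> LGK_adj (f (Inl (p,1))) (f (Inr (l,1)))" using fadj[OF u v] by simp
  also have "\<dots> \<longleftrightarrow> g p \<subseteq> h l" using i' j' by simp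
  finally show ?thesis .
qed

lemma aut_gh: "aut q g h"
  unfolding aut_def aut_axioms_def using pg_axioms gP' hL' inc' by blast

lemma gE1: "g E1 = E1"
proof -
  have v1: "Inl (E1,1) \<in> V" "Inl (E1,2) \<in> V" using E123 r2 unfolding inV_l by simp_all
  obtain i1 where i1: "f (Inl (E1,1)) = Inl (g E1, i1)" "Inl (g E1, i1) \<in> V" using fL[OF v1(1)] by blast
  obtain i2 where i2: "f (Inl (E1,2)) = Inl (g E1, i2)" "Inl (g E1, i2) \<in> V" using fL[OF v1(2)] by blast
  have "c (Inl (g E1, i1)) = r + s" using fc[OF v1(1)] i1 by (simp add: c_l)
  then have A: "(g E1 = E1 \<and> i1 = 1) \<or> (g E1 = E2 \<and> i1 = 2)" using col_l_x[OF i1(2)] by blast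
  have c2: "c (Inl (g E1, i2)) = 1" using fc[OF v1(2)] i2 E12 by (simp add: c_l)
  show ?thesis
  proof (rule ccontr)
    assume ne: "g E1 \<noteq> E1"
    then have gE: "g E1 = E2" using A by blast
    show False
    proof (cases "i2 = 2")
      case True
      then have "c (Inl (g E1, i2)) = r + s" using gE by (simp add: c_l)
      then show False using c2 rs by simp
    next
      case False
      then have "c (Inl (g E1, i2)) = i2 - 1" using gE E12 by (simp add: c_l)
      then have "i2 = 2" using c2 by simp
      then show False using False by simp
    qed
  qed
qed

lemma gE2: "g E2 = E2"
proof -
  have v1: "Inl (E2,2) \<in> V" "Inl (E2,1) \<in> V" using E123 r2 unfolding inV_l by simp_all
  obtain i1 where i1: "f (Inl (E2,2)) = Inl (g E2, i1)" "Inl (g E2, i1) \<in> V" using fL[OF v1(1)] by blast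
  obtain i2 where i2: "f (Inl (E2,1)) = Inl (g E2, i2)" "Inl (g E2, i2) \<in> V" using fL[OF v1(2)] by blast
  have "c (Inl (g E2, i1)) = r + s" using fc[OF v1(1)] i1 E12 by (simp add: c_l)
  then have A: "(g E2 = E1 \<and> i1 = 1) \<or> (g E2 = E2 \<and> i1 = 2)" using col_l_x[OF i1(2)] by blast
  have c2: "c (Inl (g E2, i2)) = 0" using fc[OF v1(2)] i2 E12 by (simp add: c_l)
  have i2r: "1 \<le> i2" using i2(2) unfolding inV_l by simp
  show ?thesis
  proof (rule ccontr)
    assume ne: "g E2 \<noteq> E2"
    then have gE: "g E2 = E1" using A by blast
    show False
    proof (cases "i2 = 1")
      case True
      then have "c (Inl (g E2, i2)) = r + s" using gE by (simp add: c_l)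
      then show False using c2 rs by simp
    next
      case False
      then have "c (Inl (g E2, i2)) = i2 - 1" using gE E12 by (simp add: c_l)
      then show False using c2 i2r False by simp
    qed
  qed
qed

lemma hLA: "h LA = LA"
proof -
  have v1: "Inr (LA,1) \<in> V" "Inr (LA,2) \<in> V" using Lin s2 unfolding inV_r by simp_all
  obtain j1 where j1: "f (Inr (LA,1)) = Inr (h LA, j1)" "Inr (h LA, j1) \<in> V" using fR[OF v1(1)] by blast
  obtain j2 where j2: "f (Inr (LA,2)) = Inr (h LA, j2)" "Inr (h LA, j2) \<in> V" using fR[OF v1(2)] by blast
  have "c (Inr (h LA, j1)) = r + s" using fc[OF v1(1)] j1 by (simp add: c_r)
  then have A: "(h LA = LA \<and> j1 = 1) \<or> ((h LA = F1 1 \<or> h LA = F1 2) \<and> j1 = 2)" using col_r_x[OF j1(2)] by blast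
  have c2: "c (Inr (h LA, j2)) = r + 1" using fc[OF v1(2)] j2 Lne by (simp add: c_r)
  show ?thesis
  proof (rule ccontr)
    assume ne: "h LA \<noteq> LA"
    then have hF: "h LA = F1 1 \<or> h LA = F1 2" using A by blast
    show False
    proof (cases "j2 = 2")
      case True
      then have "c (Inr (h LA, j2)) = r + s" using hF by (auto simp add: c_r)
      then show False using c2 s2 by simp
    next
      case False
      then have "c (Inr (h LA, j2)) = r + j2 - 1" using ne by (simp add: c_r)
      then show False using c2 False by simp
    qed
  qed
qed

lemma hF: assumes "l = F1 1 \<or> l = F1 2" shows "h l = F1 1 \<or> h l = F1 2"
proof -
  have lL: "l \<in> lines q" using assms Lin by blast
  have lA: "l \<noteq> LA" using assms Lne by metis
  have v1: "Inr (l,2) \<in> V" "Inr (l,1) \<in> V" using lL s2 unfolding inV_r by simp_all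
  obtain j1 where j1: "f (Inr (l,2)) = Inr (h l, j1)" "Inr (h l, j1) \<in> V" using fR[OF v1(1)] by blast
  obtain j2 where j2: "f (Inr (l,1)) = Inr (h l, j2)" "Inr (h l, j2) \<in> V" using fR[OF v1(2)] by blast
  have "c (Inr (h l, j1)) = r + s" using fc[OF v1(1)] j1 assms lA by (simp add: c_r)
  then have A: "(h l = LA \<and> j1 = 1) \<or> ((h l = F1 1 \<or> h l = F1 2) \<and> j1 = 2)" using col_r_x[OF j1(2)] by blast
  have c2: "c (Inr (h l, j2)) = r" using fc[OF v1(2)] j2 lA by (simp add: c_r)
  have j2r: "1 \<le> j2" using j2(2) unfolding inV_r by simp
  show ?thesis
  proof (rule ccontr)
    assume ne: "\<not> ?thesis"
    then have hA: "h l = LA" using A by blast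
    show False
    proof (cases "j2 = 1")
      case True
      then have "c (Inr (h l, j2)) = r + s" using hA by (simp add: c_r)
      then show False using c2 s2 by simp
    next
      case False
      then have "c (Inr (h l, j2)) = r + j2 - 1" using hA Lne by (simp add: c_r)
      then show False using c2 False j2r by simp
    qed
  qed
qed

lemma h_inj: assumes "l \<in> lines q" "l' \<in> lines q" "h l = h l'" shows "l = l'"
proof (rule ccontr)
  assume ne: "l \<noteq> l'"
  obtain p where p: "p \<in> points q" "p \<subseteq> l" "\<not> p \<subseteq> l'" using line_sep[OF assms(1,2) ne] by blast
  have "g p \<subseteq> h l" using inc'[OF p(1) assms(1)] p(2) by simp
  then have "p \<subseteq> l'" using inc'[OF p(1) assms(2)] assms(3) by simp
  then show False using p(3) by simp
qed

lemma gE3: "g E3 = E3"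
proof -
  have n: "h (F1 1) \<noteq> h (F1 2)" using h_inj Lin Lne by metis
  have a: "h (F1 1) = F1 1 \<or> h (F1 1) = F1 2" "h (F1 2) = F1 1 \<or> h (F1 2) = F1 2" using hF by blast+
  have s1: "g E3 \<subseteq> h (F1 1)" "g E3 \<subseteq> h (F1 2)" using inc' E123(3) Lin E3on by blast+
  have on: "g E3 \<subseteq> F1 1" "g E3 \<subseteq> F1 2" using a n s1 by metis+
  show ?thesis
  proof (rule ccontr)
    assume "g E3 \<noteq> E3"
    then have "F1 1 = F1 2" using uniq[of E3 "g E3" "F1 1" "F1 2"] E123(3) gP' Lin E3on on by metis
    then show False using Lne by simp
  qed
qed

lemma aut_base_gh: "aut_base q g h"
  unfolding aut_base_def aut_base_axioms_def
  using aut_gh gE1 gE2 gE3 hLA by simp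

lemma g_id': "p \<in> points q \<Longrightarrow> g p = p"
  using aut_base.g_id[OF aut_base_gh] by blast

lemma h_id: assumes "l \<in> lines q" shows "h l = l"
proof -
  obtain u w where uw: "u \<in> Vq q" "w \<in> Vq q" "u \<noteq> z0" "w \<noteq> z0" "pt q u \<noteq> pt q w"
    "pt q u \<subseteq> l" "pt q w \<subseteq> l" using line_points[OF assms] by blast
  have P: "pt q u \<in> points q" "pt q w \<in> points q" using ptP uw by simp_all
  have "pt q u \<subseteq> h l" "pt q w \<subseteq> h l" using inc'[OF P(1) assms] inc'[OF P(2) assms] g_id' P uw by simp_all
  then show ?thesis using uniq[OF P uw(5) hL'[OF assms] assms] uw by simp
qed

lemma c_inj_l: assumes "Inl (p,i) \<in> V" "Inl (p,i') \<in> V" "c (Inl (p,i)) = c (Inl (p,i'))" shows "i = i'"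
proof (cases "c (Inl (p,i)) = r + s")
  case True
  then have A: "(p = E1 \<and> i = 1) \<or> (p = E2 \<and> i = 2)" using col_l_x[OF assms(1)] by blast
  have B: "(p = E1 \<and> i' = 1) \<or> (p = E2 \<and> i' = 2)" using col_l_x[OF assms(2)] True assms(3) by simp
  show ?thesis using A B E12 by auto
next
  case False
  have n1: "\<not> (p = E1 \<and> i = 1)" "\<not> (p = E2 \<and> i = 2)" using False by (auto simp: c_l)
  have n2: "\<not> (p = E1 \<and> i' = 1)" "\<not> (p = E2 \<and> i' = 2)" using False assms(3) by (auto simp: c_l)
  have "c (Inl (p,i)) = i - 1" "c (Inl (p,i')) = i' - 1" by (simp_all only: c_l n1 n2 if_False)
  moreover have "1 \<le> i" "1 \<le> i'" using assms(1,2) unfolding inV_l by simp_all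
  ultimately show ?thesis using assms(3) by simp
qed

lemma c_inj_r: assumes "Inr (l,j) \<in> V" "Inr (l,j') \<in> V" "c (Inr (l,j)) = c (Inr (l,j'))" shows "j = j'"
proof (cases "c (Inr (l,j)) = r + s")
  case True
  then have A: "(l = LA \<and> j = 1) \<or> ((l = F1 1 \<or> l = F1 2) \<and> j = 2)" using col_r_x[OF assms(1)] by blast
  have B: "(l = LA \<and> j' = 1) \<or> ((l = F1 1 \<or> l = F1 2) \<and> j' = 2)" using col_r_x[OF assms(2)] True assms(3) by simp
  show ?thesis using A B Lne by auto
next
  case False
  have n1: "\<not> (l = LA \<and> j = 1)" "\<not> ((l = F1 1 \<or> l = F1 2) \<and> j = 2)" using False by (auto simp: c_r)
  have n2: "\<not> (l = LA \<and> j' = 1)" "\<not> ((l = F1 1 \<or> l = F1 2) \<and> j' = 2)" using False assms(3) by (auto simp: c_r)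
  have "c (Inr (l,j)) = r + j - 1" "c (Inr (l,j')) = r + j' - 1" by (simp_all only: c_r n1 n2 if_False)
  moreover have "1 \<le> j" "1 \<le> j'" using assms(1,2) unfolding inV_r by simp_all
  ultimately show ?thesis using assms(3) by simp
qed

theorem f_id: "v \<in> V \<Longrightarrow> f v = v"
proof -
  assume v: "v \<in> V"
  then consider (L) p i where "v = Inl (p,i)" "p \<in> points q" | (R) l j where "v = Inr (l,j)" "l \<in> lines q"
    using V_cases[OF v] by blast
  then show ?thesis
  proof cases
    case L
    then have vv: "Inl (p,i) \<in> V" using v by simp
    obtain i' where i': "f (Inl (p,i)) = Inl (g p, i')" "Inl (g p, i') \<in> V" using fL[OF vv] by blast
    have gp: "g p = p" using g_id' L by simp
    have "c (Inl (p,i')) = c (Inl (p,i))" using fc[OF vv] i' gp by simp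
    then have "i' = i" using c_inj_l[of p i' i] i' gp vv by simp
    then show ?thesis using L i' gp by simp
  next
    case R
    then have vv: "Inr (l,j) \<in> V" using v by simp
    obtain j' where j': "f (Inr (l,j)) = Inr (h l, j')" "Inr (h l, j') \<in> V" using fR[OF vv] by blast
    have hl: "h l = l" using h_id R by simp
    have "c (Inr (l,j')) = c (Inr (l,j))" using fc[OF vv] j' hl by simp
    then have "j' = j" using c_inj_r[of l j' j] j' hl vv by simp
    then show ?thesis using R j' hl by simp
  qed
qed

end

definition kd :: "lgvert \<Rightarrow> vec3 set + vec3 set" where "kd = map_sum fst fst"

lemma adj_kd: "LGK_adj u v = (case (kd u, kd v) of (Inl p, Inr l) \<Rightarrow> p \<subseteq> l | (Inr l, Inl p) \<Rightarrow> p \<subseteq> l | _ \<Rightarrow> False)"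
  unfolding kd_def by (cases u; cases v) auto

lemma adj_kd_eq: "kd u = kd u' \<Longrightarrow> kd v = kd v' \<Longrightarrow> LGK_adj u v = LGK_adj u' v'"
  by (simp add: adj_kd)

lemma kd_l[simp]: "kd (Inl (p,i)) = Inl p" by (simp add: kd_def)
lemma kd_r[simp]: "kd (Inr (l,j)) = Inr l" by (simp add: kd_def)

locale LB = UB +
  fixes cc :: "lgvert \<Rightarrow> nat" and k :: nat
  assumes cV: "cc ` V \<subseteq> {..<k}" and pr: "proper_coloring V LGK_adj cc"
    and di: "distinguishing V LGK_adj cc" and kk: "k \<le> r + s"
begin

lemma swap_aut:
  assumes a: "a \<in> V" and b: "b \<in> V" and kab: "kd a = kd b" and cab: "cc a = cc b"
  shows "a = b"
proof -
  define \<sigma> where "\<sigma> v = (if v = a then b else if v = b then a else v)" for v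
  have inv: "\<sigma> (\<sigma> v) = v" for v unfolding \<sigma>_def by auto
  have inV: "v \<in> V \<Longrightarrow> \<sigma> v \<in> V" for v unfolding \<sigma>_def using a b by auto
  have bij: "bij_betw \<sigma> V V" by (rule bij_betw_byWitness[where f' = \<sigma>]) (auto simp: inV inv)
  have kds: "kd (\<sigma> v) = kd v" for v unfolding \<sigma>_def using kab by auto
  have "graph_aut V LGK_adj \<sigma>" unfolding graph_aut_def using bij adj_kd_eq[OF kds kds] by metis
  moreover have "\<forall>v\<in>V. cc (\<sigma> v) = cc v" unfolding \<sigma>_def using cab by auto
  ultimately have "\<forall>v\<in>V. \<sigma> v = v" using di unfolding distinguishing_def by blast
  then have "\<sigma> a = a" using a by blast
  then show ?thesis unfolding \<sigma>_def by (auto split: if_splits)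
qed

definition CP where "CP p = (\<lambda>i. cc (Inl (p,i))) ` {1..r}"
definition CL where "CL l = (\<lambda>j. cc (Inr (l,j))) ` {1..s}"

lemma injP: "p \<in> points q \<Longrightarrow> inj_on (\<lambda>i. cc (Inl (p,i))) {1..r}"
  unfolding inj_on_def
proof (intro ballI impI)
  fix x y assume "p \<in> points q" "x \<in> {1..r}" "y \<in> {1..r}" "cc (Inl (p,x)) = cc (Inl (p,y))"
  then have "Inl (p,x) = Inl (p,y)" using swap_aut[of "Inl (p,x)" "Inl (p,y)"] by (simp add: inV_l)
  then show "x = y" by simp
qed
lemma injL: "l \<in> lines q \<Longrightarrow> inj_on (\<lambda>j. cc (Inr (l,j))) {1..s}"
  unfolding inj_on_def
proof (intro ballI impI)
  fix x y assume "l \<in> lines q" "x \<in> {1..s}" "y \<in> {1..s}" "cc (Inr (l,x)) = cc (Inr (l,y))"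
  then have "Inr (l,x) = Inr (l,y)" using swap_aut[of "Inr (l,x)" "Inr (l,y)"] by (simp add: inV_r)
  then show "x = y" by simp
qed

lemma cardP: "p \<in> points q \<Longrightarrow> card (CP p) = r"
  unfolding CP_def using injP by (simp add: card_image)
lemma cardL: "l \<in> lines q \<Longrightarrow> card (CL l) = s"
  unfolding CL_def using injL by (simp add: card_image)

lemma CP_sub: "p \<in> points q \<Longrightarrow> CP p \<subseteq> {..<k}"
  unfolding CP_def using cV inV_l by blast
lemma CL_sub: "l \<in> lines q \<Longrightarrow> CL l \<subseteq> {..<k}"
  unfolding CL_def using cV inV_r by blast

lemma disj: assumes "p \<in> points q" "l \<in> lines q" "p \<subseteq> l" shows "CP p \<inter> CL l = {}"
proof -
  have "cc (Inl (p,i)) \<noteq> cc (Inr (l,j))" if "i \<in> {1..r}" "j \<in> {1..s}" for i j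
  proof -
    have "Inl (p,i) \<in> V" "Inr (l,j) \<in> V" using assms that inV_l inV_r by simp_all
    moreover have "LGK_adj (Inl (p,i)) (Inr (l,j))" using assms by simp
    ultimately show ?thesis using pr unfolding proper_coloring_def by blast
  qed
  then show ?thesis unfolding CP_def CL_def by blast
qed

lemma compl: assumes "p \<in> points q" "l \<in> lines q" "p \<subseteq> l" shows "CP p = {..<k} - CL l"
proof -
  have "card (CP p \<union> CL l) = r + s"
    using disj[OF assms] cardP[OF assms(1)] cardL[OF assms(2)]
    by (simp add: card_Un_disjoint CP_def CL_def)
  moreover have "CP p \<union> CL l \<subseteq> {..<k}" using CP_sub CL_sub assms by blast
  ultimately have "CP p \<union> CL l = {..<k}" using kk
    by (metis card_lessThan card_mono card_subset_eq finite_lessThan le_antisym)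
  then show ?thesis using disj[OF assms] by blast
qed

lemma Ceq: "p \<in> points q \<Longrightarrow> p' \<in> points q \<Longrightarrow> l \<in> lines q \<Longrightarrow> p \<subseteq> l \<Longrightarrow> p' \<subseteq> l \<Longrightarrow> CP p = CP p'"
  using compl by metis

lemma allC: assumes "p \<in> points q" shows "CP p = CP E1"
proof -
  have E1: "E1 \<in> points q" by (rule E123(1))
  consider (a) b c where "b < q" "c < q" "p = pt q (1,b,c)" | (b) c where "c < q" "p = pt q (0,1,c)"
    | (c) "p = pt q (0,0,1)" using NF[OF assms] by blast
  then show ?thesis
  proof cases
    case a
    have P0: "pt q (1,b,0) \<in> points q" using a qq by (simp add: geo)
    have "CP p = CP (pt q (1,b,0))"
      by (rule Ceq[of _ _ "F1 b"]) (use a qq assms in \<open>simp_all add: geo\<close>)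
    also have "\<dots> = CP E1"
      by (rule Ceq[of _ _ "F2 0"]) (use a qq in \<open>simp_all add: geo\<close>)
    finally show ?thesis .
  next
    case b
    have "CP p = CP E2"
      by (rule Ceq[of _ _ "LX"]) (use b qq assms in \<open>simp_all add: geo\<close>)
    also have "\<dots> = CP E1"
      by (rule Ceq[of _ _ "F2 0"]) (use qq in \<open>simp_all add: geo\<close>)
    finally show ?thesis .
  next
    case c
    show ?thesis
      by (rule Ceq[of _ _ "F1 0"]) (use c qq in \<open>simp_all add: geo\<close>)
  qed
qed

end

definition sw :: "vec3 \<Rightarrow> vec3" where "sw v = (fst (snd v), fst v, snd (snd v))"

lemma sw_sw[simp]: "sw (sw v) = v" unfolding sw_def by simp
lemma sw_simp[simp]: "sw (a,b,c) = (b,a,c)" unfolding sw_def by simp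
lemma sw_smul: "sw (smul q k v) = smul q k (sw v)" by (cases v rule: prod_cases3) simp
lemma sw_vadd: "sw (vadd q u w) = vadd q (sw u) (sw w)"
  by (cases u rule: prod_cases3, cases w rule: prod_cases3) simp
lemma sw_Vq: "sw v \<in> Vq q \<longleftrightarrow> v \<in> Vq q" by (cases v rule: prod_cases3) auto
lemma sw_z0: "sw v = (0,0,0) \<longleftrightarrow> v = (0,0,0)" by (cases v rule: prod_cases3) auto
lemma sw_inj: "inj sw" by (metis injI sw_sw)
lemma sw_sub: "sw ` A \<subseteq> sw ` B \<longleftrightarrow> A \<subseteq> B" using sw_inj by (simp add: inj_image_subset_iff)
lemma sw_sw_img[simp]: "sw ` sw ` A = A" by (simp add: image_image)

context pg begin

lemma sw_pt: "sw ` pt q v = pt q (sw v)"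
  by (simp add: pt_image image_image sw_smul)

lemma sw_sp2: "sw ` sp2 q u w = sp2 q (sw u) (sw w)"
  unfolding sp2_image image_image by (simp add: sw_vadd sw_smul split_def)

lemma sw_indep: "indep q u w \<Longrightarrow> indep q (sw u) (sw w)"
  unfolding indep_def by (metis sw_smul sw_vadd sw_z0 sw_sw)

lemma sw_points: "p \<in> points q \<Longrightarrow> sw ` p \<in> points q"
proof -
  assume "p \<in> points q"
  then obtain v where v: "v \<in> Vq q" "v \<noteq> z0" "p = pt q v" using points_iff by blast
  then show ?thesis using sw_pt ptP sw_Vq sw_z0 by metis
qed

lemma sw_lines: "l \<in> lines q \<Longrightarrow> sw ` l \<in> lines q"
proof -
  assume "l \<in> lines q"
  then obtain u w where uw: "u \<in> Vq q" "w \<in> Vq q" "indep q u w" "l = sp2 q u w" using lines_iff by blast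
  then show ?thesis using sw_sp2 lineI sw_Vq sw_indep by metis
qed

end

context LB begin

lemma CLall: assumes "l \<in> lines q" shows "CL l = {..<k} - CP E1"
proof -
  obtain u w where uw: "u \<in> Vq q" "w \<in> Vq q" "u \<noteq> z0" "pt q u \<subseteq> l"
    using line_points[OF assms] by blast
  have P: "pt q u \<in> points q" using ptP uw by simp
  have "CP (pt q u) = {..<k} - CL l" using compl[OF P assms uw(4)] .
  moreover have "CP (pt q u) = CP E1" using allC[OF P] .
  ultimately show ?thesis using CL_sub[OF assms] by blast
qed

definition "\<pi> p i = inv_into {1..r} (\<lambda>j. cc (Inl (sw ` p, j))) (cc (Inl (p,i)))"
definition "\<rho> l j = inv_into {1..s} (\<lambda>j'. cc (Inr (sw ` l, j'))) (cc (Inr (l,j)))"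
definition "FF v = (case v of Inl (p,i) \<Rightarrow> Inl (sw ` p, \<pi> p i) | Inr (l,j) \<Rightarrow> Inr (sw ` l, \<rho> l j))"

lemma \<pi>_props: assumes "p \<in> points q" "i \<in> {1..r}"
  shows "\<pi> p i \<in> {1..r}" "cc (Inl (sw ` p, \<pi> p i)) = cc (Inl (p,i))"
proof -
  have "cc (Inl (p,i)) \<in> CP p" unfolding CP_def using assms by blast
  also have "CP p = CP (sw ` p)" using allC assms sw_points by metis
  finally have m: "cc (Inl (p,i)) \<in> (\<lambda>j. cc (Inl (sw ` p, j))) ` {1..r}" unfolding CP_def .
  show "\<pi> p i \<in> {1..r}" unfolding \<pi>_def using inv_into_into[OF m] .
  show "cc (Inl (sw ` p, \<pi> p i)) = cc (Inl (p,i))" unfolding \<pi>_def using f_inv_into_f[OF m] .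
qed

lemma \<rho>_props: assumes "l \<in> lines q" "j \<in> {1..s}"
  shows "\<rho> l j \<in> {1..s}" "cc (Inr (sw ` l, \<rho> l j)) = cc (Inr (l,j))"
proof -
  have "cc (Inr (l,j)) \<in> CL l" unfolding CL_def using assms by blast
  also have "CL l = CL (sw ` l)" using CLall assms sw_lines by metis
  finally have m: "cc (Inr (l,j)) \<in> (\<lambda>j'. cc (Inr (sw ` l, j'))) ` {1..s}" unfolding CL_def .
  show "\<rho> l j \<in> {1..s}" unfolding \<rho>_def using inv_into_into[OF m] .
  show "cc (Inr (sw ` l, \<rho> l j)) = cc (Inr (l,j))" unfolding \<rho>_def using f_inv_into_f[OF m] .
qed

lemma \<pi>_inv: assumes "p \<in> points q" "i \<in> {1..r}" shows "\<pi> (sw ` p) (\<pi> p i) = i"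
proof -
  have "\<pi> (sw ` p) (\<pi> p i) = inv_into {1..r} (\<lambda>j. cc (Inl (p, j))) (cc (Inl (p,i)))"
    unfolding \<pi>_def[of "sw ` p"] using \<pi>_props[OF assms] by simp
  also have "\<dots> = i" using inv_into_f_f[OF injP[OF assms(1)] assms(2)] .
  finally show ?thesis .
qed

lemma \<rho>_inv: assumes "l \<in> lines q" "j \<in> {1..s}" shows "\<rho> (sw ` l) (\<rho> l j) = j"
proof -
  have "\<rho> (sw ` l) (\<rho> l j) = inv_into {1..s} (\<lambda>j'. cc (Inr (l, j'))) (cc (Inr (l,j)))"
    unfolding \<rho>_def[of "sw ` l"] using \<rho>_props[OF assms] by simp
  also have "\<dots> = j" using inv_into_f_f[OF injL[OF assms(1)] assms(2)] .
  finally show ?thesis .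
qed

lemma FF_V: "v \<in> V \<Longrightarrow> FF v \<in> V"
proof -
  assume v: "v \<in> V"
  then consider (L) p i where "v = Inl (p,i)" "p \<in> points q" "i \<in> {1..r}"
    | (R) l j where "v = Inr (l,j)" "l \<in> lines q" "j \<in> {1..s}" using V_cases[OF v] by blast
  then show ?thesis
  proof cases
    case L then show ?thesis using \<pi>_props[OF L(2,3)] sw_points[OF L(2)] by (simp add: FF_def inV_l)
  next
    case R then show ?thesis using \<rho>_props[OF R(2,3)] sw_lines[OF R(2)] by (simp add: FF_def inV_r)
  qed
qed

lemma FF_inv: "v \<in> V \<Longrightarrow> FF (FF v) = v"
proof -
  assume v: "v \<in> V"
  then consider (L) p i where "v = Inl (p,i)" "p \<in> points q" "i \<in> {1..r}"
    | (R) l j where "v = Inr (l,j)" "l \<in> lines q" "j \<in> {1..s}" using V_cases[OF v] by blast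
  then show ?thesis
  proof cases
    case L then show ?thesis using \<pi>_inv[OF L(2,3)] unfolding FF_def by simp
  next
    case R then show ?thesis using \<rho>_inv[OF R(2,3)] unfolding FF_def by simp
  qed
qed

lemma FF_c: "v \<in> V \<Longrightarrow> cc (FF v) = cc v"
proof -
  assume v: "v \<in> V"
  then consider (L) p i where "v = Inl (p,i)" "p \<in> points q" "i \<in> {1..r}"
    | (R) l j where "v = Inr (l,j)" "l \<in> lines q" "j \<in> {1..s}" using V_cases[OF v] by blast
  then show ?thesis
  proof cases
    case L then show ?thesis using \<pi>_props[OF L(2,3)] unfolding FF_def by simp
  next
    case R then show ?thesis using \<rho>_props[OF R(2,3)] unfolding FF_def by simp
  qed
qed

lemma FF_adj: "LGK_adj (FF u) (FF v) = LGK_adj u v"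
  unfolding FF_def by (cases u; cases v) (auto simp: sw_sub)

lemma FF_aut: "graph_aut V LGK_adj FF"
  unfolding graph_aut_def
proof (intro conjI ballI)
  show "bij_betw FF V V" by (rule bij_betw_byWitness[where f' = FF]) (auto simp: FF_V FF_inv)
next
  fix u v assume "u \<in> V" "v \<in> V"
  show "LGK_adj u v = LGK_adj (FF u) (FF v)" using FF_adj by simp
qed

theorem LB_false: False
proof -
  have "\<forall>v\<in>V. FF v = v" using di FF_aut FF_c unfolding distinguishing_def by blast
  moreover have "Inl (E1,1) \<in> V" using E123 rs unfolding inV_l by simp
  ultimately have "FF (Inl (E1,1)) = Inl (E1,1)" by blast
  moreover have "sw ` E1 = E2" using sw_pt by simp
  ultimately show False using E12 unfolding FF_def by simp
qed

end

context UB begin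

lemma distinguishing_c: "distinguishing V LGK_adj c"
  unfolding distinguishing_def
proof (intro allI impI)
  fix f assume "graph_aut V LGK_adj f \<and> (\<forall>v\<in>V. c (f v) = c v)"
  then interpret UBf q r s f by unfold_locales auto
  show "\<forall>v\<in>V. f v = v" using f_id by blast
qed

lemma chi: "chi_D V LGK_adj = r + s + 1"
  unfolding chi_D_def
proof (rule Least_equality)
  show "\<exists>cc. cc ` V \<subseteq> {..<r + s + 1} \<and> proper_coloring V LGK_adj cc \<and> distinguishing V LGK_adj cc"
    using c_range proper distinguishing_c by blast
next
  fix k assume "\<exists>cc. cc ` V \<subseteq> {..<k} \<and> proper_coloring V LGK_adj cc \<and> distinguishing V LGK_adj cc"
  then obtain cc where cc: "cc ` V \<subseteq> {..<k}" "proper_coloring V LGK_adj cc" "distinguishing V LGK_adj cc" by blast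
  show "r + s + 1 \<le> k"
  proof (rule ccontr)
    assume "\<not> r + s + 1 \<le> k"
    then have "k \<le> r + s" by simp
    then interpret LB q r s cc k using cc by unfold_locales auto
    show False by (rule LB_false)
  qed
qed

end

theorem mainTheorem13:
  fixes q r s :: nat
  assumes "prime q" and "q \<ge> 5" and "r \<ge> 2" and "s \<ge> 2"
  shows "chi_D (LGK_verts q r s) LGK_adj = r + s + 1"
proof -
  interpret UB q r s using assms by unfold_locales auto
  show ?thesis by (rule chi)
qed


end
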